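(* Let $K,L$ be Henselian valued fields of characteristic zero such that $K$ is an $\mathcal{L}_{\mathrm{val}}$-substructure of $L$, i.e. $K$ is a subfield of $L$ and $\mathcal{O}_K=K\cap\mathcal{O}_L$. Then for every positive integer $N$ the inclusion $K\hookrightarrow L$ induces an injective map $\mathrm{RV}_{N,K}\hookrightarrow\mathrm{RV}_{N,L}$, and with these identifications $K$ (with its natural $\mathcal{L}_{\mathrm{RV}}$-structure) is an $\mathcal{L}_{\mathrm{RV}}$-substructure of $L$.
   Context: For a valued field $K$ with valuation ring $\mathcal{O}_K$, maximal ideal $\mathcal{M}_K$, valuation $\mathrm{ord}$, and $N\ge1$: $\mathrm{RV}_{N,K}=K^\times/(1+N\mathcal{M}_K)\cup\{0\}$, $\mathrm{rv}_N\colon K\to\mathrm{RV}_{N,K}$ the projection with $\mathrm{rv}_N(0)=0$, and $\mathrm{rv}_{N,M}\colon\mathrm{RV}_{M,K}\to\mathrm{RV}_{N,K}$ the induced maps for $N\mid M$. The language $\mathcal{L}_{\mathrm{val}}=\{0,1,+,-,\cdot,\mathcal{O}\}$ with $\mathcal{O}$ interpreted as $\mathcal{O}_K$. The multisorted language $\mathcal{L}_{\mathrm{RV}}$ (sorts $\mathrm{VF}$, $\mathrm{RV}_N$) consists of the ring language on $\mathrm{VF}$; on each $\mathrm{RV}_N$: constants $0$ and $1=\mathrm{rv}_N(1)$, multiplication (group multiplication of $K^\times/(1+N\mathcal{M}_K)$ extended by $0$), the binary relation $\mathrm{rv}_N(x)\mid\mathrm{rv}_N(y)\Leftrightarrow\mathrm{ord}\,x\le\mathrm{ord}\,y$,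 the ternary relation $\oplus(\xi_1,\xi_2,\xi_3)$ meaning there exist $x_i\in K$ with $\mathrm{rv}_N(x_i)=\xi_i$ and $x_1+x_2=x_3$; the maps $\mathrm{rv}_N$, $\mathrm{rv}_{N,M}$; and relations $P_{N,d}\subseteq\mathrm{RV}_N\times\mathrm{RV}_{N^2}^{d+1}$ where $P_{N,d}(\xi,\zeta_0,\dots,\zeta_d)$ holds iff $\xi\in\mathrm{RV}_N^\times$ and, for some (equivalently all) $a_i\in K$ with $\mathrm{rv}_{N^2}(a_i)=\zeta_i$: (i) every element of $\{\mathrm{rv}_N(\sum_{i=1}^d y_i)\mid y_i\in K,\ \mathrm{rv}_N(y_i)=\mathrm{rv}_N(ia_i)\xi^{i-1}\}$ has order $\le\min_{1\le i\le d}\mathrm{ord}(a_i\xi^{i-1})+\mathrm{ord}\,N$, and (ii) there is $\tilde\xi\in\mathrm{RV}_{N^2}$ with $\mathrm{rv}_N(\tilde\xi)=\xi$ and $\sum_{i=0}^d y_i=0$ for some $y_i\in K$ with $\mathrm{rv}_{N^2}(y_i)=\mathrm{rv}_{N^2}(a_i)\tilde\xi^i$. *)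

theory Defs
  imports "HOL-Computational_Algebra.Polynomial"
begin

text \<open>A valued field is represented by a subfield F of an ambient field (type 'a)
  together with its valuation ring R (a subset of F).  The ambient field L itself is
  F = UNIV.\<close>

definition subfield :: "'a::field set \<Rightarrow> bool" where
  "subfield F \<longleftrightarrow> 0 \<in> F \<and> 1 \<in> F \<and>
     (\<forall>x\<in>F. \<forall>y\<in>F. x + y \<in> F \<and> x - y \<in> F \<and> x * y \<in> F) \<and>
     (\<forall>x\<in>F. inverse x \<in> F)"

definition valuation_ring :: "'a::field set \<Rightarrow> 'a set \<Rightarrow> bool" where
  "valuation_ring F R \<longleftrightarrow> R \<subseteq> F \<and> 0 \<in> R \<and> 1 \<in> R \<and>
     (\<forall>x\<in>R. \<forall>y\<in>R. x + y \<in> R \<and> x - y \<in> R \<and> x * y \<in> R) \<and>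
     (\<forall>x\<in>F. x \<noteq> 0 \<longrightarrow> x \<in> R \<or> inverse x \<in> R)"

definition maxid :: "'a::field set \<Rightarrow> 'a set \<Rightarrow> 'a set" where
  "maxid F R = {x \<in> R. x = 0 \<or> inverse x \<notin> R}"

definition henselian :: "'a::field set \<Rightarrow> 'a set \<Rightarrow> bool" where
  "henselian F R \<longleftrightarrow>
     (\<forall>p::'a poly. (\<forall>i. coeff p i \<in> R) \<and> lead_coeff p = 1 \<longrightarrow>
        (\<forall>a\<in>R. poly p a \<in> maxid F R \<and> poly (pderiv p) a \<notin> maxid F R \<longrightarrow>
           (\<exists>b\<in>R. poly p b = 0 \<and> b - a \<in> maxid F R)))"

text \<open>ord x \<le> ord y (with ord 0 = \<infinity>).\<close>
definition val_le :: "'a::field set \<Rightarrow> 'a \<Rightarrow> 'a \<Rightarrow> bool" where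
  "val_le R x y \<longleftrightarrow> (x = 0 \<longrightarrow> y = 0) \<and> (x \<noteq> 0 \<longrightarrow> y / x \<in> R)"

text \<open>rv_N(x): the class of x in F^\<times>/(1+N M_F), and {0} for x = 0.\<close>
definition rv :: "'a::field set \<Rightarrow> 'a set \<Rightarrow> nat \<Rightarrow> 'a \<Rightarrow> 'a set" where
  "rv F R N x = (if x = 0 then {0}
     else {y \<in> F. y / x \<in> (\<lambda>m. 1 + of_nat N * m) ` maxid F R})"

definition RV :: "'a::field set \<Rightarrow> 'a set \<Rightarrow> nat \<Rightarrow> 'a set set" where
  "RV F R N = rv F R N ` F"

text \<open>Interpretations of the L_RV symbols on the RV_N sorts (functions by their graphs).\<close>
definition rv_mult_graph :: "'a::field set \<Rightarrow> 'a set \<Rightarrow> nat \<Rightarrow> 'a set \<Rightarrow> 'a set \<Rightarrow> 'a set \<Rightarrow> bool" where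
  "rv_mult_graph F R N \<xi> \<eta> \<zeta> \<longleftrightarrow>
     (\<exists>x\<in>F. \<exists>y\<in>F. rv F R N x = \<xi> \<and> rv F R N y = \<eta> \<and> rv F R N (x * y) = \<zeta>)"

definition rv_dvd :: "'a::field set \<Rightarrow> 'a set \<Rightarrow> nat \<Rightarrow> 'a set \<Rightarrow> 'a set \<Rightarrow> bool" where
  "rv_dvd F R N \<xi> \<eta> \<longleftrightarrow>
     (\<exists>x\<in>F. \<exists>y\<in>F. rv F R N x = \<xi> \<and> rv F R N y = \<eta> \<and> val_le R x y)"

definition rv_oplus :: "'a::field set \<Rightarrow> 'a set \<Rightarrow> nat \<Rightarrow> 'a set \<Rightarrow> 'a set \<Rightarrow> 'a set \<Rightarrow> bool" where
  "rv_oplus F R N \<xi>1 \<xi>2 \<xi>3 \<longleftrightarrow>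
     (\<exists>x1\<in>F. \<exists>x2\<in>F. \<exists>x3\<in>F. rv F R N x1 = \<xi>1 \<and> rv F R N x2 = \<xi>2 \<and>
        rv F R N x3 = \<xi>3 \<and> x1 + x2 = x3)"

definition rv_NM_graph :: "'a::field set \<Rightarrow> 'a set \<Rightarrow> nat \<Rightarrow> nat \<Rightarrow> 'a set \<Rightarrow> 'a set \<Rightarrow> bool" where
  "rv_NM_graph F R N M \<eta> \<xi> \<longleftrightarrow> (\<exists>x\<in>F. rv F R M x = \<eta> \<and> rv F R N x = \<xi>)"

text \<open>Products in RV are computed on representatives: rv_N(i a_i) \<xi>^(i-1) = rv_N(i a_i x^(i-1))
  for a representative x of \<xi>, and rv_{N^2}(a_i) \<xi>~^i = rv_{N^2}(a_i x'^i) for a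
  representative x' of \<xi>~.\<close>
definition rv_P :: "'a::field set \<Rightarrow> 'a set \<Rightarrow> nat \<Rightarrow> nat \<Rightarrow> 'a set \<Rightarrow> (nat \<Rightarrow> 'a set) \<Rightarrow> bool" where
  "rv_P F R N d \<xi> \<zeta> \<longleftrightarrow>
     \<xi> \<in> RV F R N \<and> \<xi> \<noteq> rv F R N 0 \<and>
     (\<exists>a::nat \<Rightarrow> 'a. (\<forall>i\<le>d. a i \<in> F \<and> rv F R (N^2) (a i) = \<zeta> i) \<and>
        \<comment> \<open>(i)\<close>
        (\<exists>x\<in>F. rv F R N x = \<xi> \<and>
           (\<forall>y::nat \<Rightarrow> 'a. (\<forall>i\<in>{1..d}. y i \<in> F \<and>
                 rv F R N (y i) = rv F R N (of_nat i * a i * x ^ (i - 1))) \<longrightarrow>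
              (\<forall>i\<in>{1..d}. val_le R (\<Sum>j=1..d. y j) (of_nat N * (a i * x ^ (i - 1)))))) \<and>
        \<comment> \<open>(ii)\<close>
        (\<exists>x'\<in>F. rv F R N x' = \<xi> \<and>
           (\<exists>y::nat \<Rightarrow> 'a. (\<forall>i\<le>d. y i \<in> F \<and>
                 rv F R (N^2) (y i) = rv F R (N^2) (a i * x' ^ i)) \<and>
              (\<Sum>i=0..d. y i) = 0)))"

definition rv_incl :: "'a::field set \<Rightarrow> 'a set \<Rightarrow> nat \<Rightarrow> 'a set \<Rightarrow> 'a set" where
  "rv_incl K OL N \<xi> = rv UNIV OL N (SOME x. x \<in> K \<and> rv K (K \<inter> OL) N x = \<xi>)"

end

theory Submission
  imports Defs
begin


locale vf =
  fixes K OL :: "'a::field_char_0 set"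
  assumes valL: "valuation_ring UNIV OL"
    and subK: "subfield K"
    and henK: "henselian K (K \<inter> OL)"
begin

abbreviation MM where "MM \<equiv> maxid UNIV OL"

definition close :: "nat \<Rightarrow> 'a \<Rightarrow> 'a \<Rightarrow> bool" where
  "close N x y \<longleftrightarrow> (\<exists>m\<in>MM. y = x + x * of_nat N * m)"

lemma O0[simp]: "0 \<in> OL" and O1[simp]: "1 \<in> OL"
  using valL by (auto simp: valuation_ring_def)
lemma O_add[intro]: "x \<in> OL \<Longrightarrow> y \<in> OL \<Longrightarrow> x + y \<in> OL"
  using valL by (auto simp: valuation_ring_def)
lemma O_diff[intro]: "x \<in> OL \<Longrightarrow> y \<in> OL \<Longrightarrow> x - y \<in> OL"
  using valL by (auto simp: valuation_ring_def)
lemma O_mult[intro]: "x \<in> OL \<Longrightarrow> y \<in> OL \<Longrightarrow> x * y \<in> OL"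
  using valL by (auto simp: valuation_ring_def)
lemma O_total: "x \<noteq> 0 \<Longrightarrow> x \<in> OL \<or> inverse x \<in> OL"
  using valL by (auto simp: valuation_ring_def)
lemma O_uminus[intro]: "x \<in> OL \<Longrightarrow> - x \<in> OL"
  using O_diff[of 0 x] by simp
lemma O_of_nat[intro,simp]: "of_nat n \<in> OL"
  by (induction n) (auto simp: O_add)
lemma O_pow[intro!]: "x \<in> OL \<Longrightarrow> x ^ k \<in> OL"
  by (induction k) auto
lemma O_sum[intro]: "(\<And>i. i \<in> S \<Longrightarrow> f i \<in> OL) \<Longrightarrow> sum f S \<in> OL"
  by (induction S rule: infinite_finite_induct) auto

lemma MM_iff: "m \<in> MM \<longleftrightarrow> m \<in> OL \<and> (m = 0 \<or> inverse m \<notin> OL)"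
  by (simp add: maxid_def)
lemma MM_O[dest]: "m \<in> MM \<Longrightarrow> m \<in> OL" by (simp add: MM_iff)
lemma MM0[simp]: "0 \<in> MM" by (simp add: MM_iff)
lemma one_notin_MM[simp]: "1 \<notin> MM" by (simp add: MM_iff)
lemma MM_mult[intro]: "a \<in> OL \<Longrightarrow> m \<in> MM \<Longrightarrow> a * m \<in> MM"
proof -
  assume a: "a \<in> OL" and m: "m \<in> MM"
  show ?thesis
  proof (cases "a * m = 0")
    case False
    hence "m \<noteq> 0" "a \<noteq> 0" by auto
    have "inverse (a*m) \<notin> OL"
    proof
      assume "inverse (a*m) \<in> OL"
      hence "a * inverse (a*m) \<in> OL" using a by auto
      also have "a * inverse (a*m) = inverse m" using \<open>a \<noteq> 0\<close> by (simp add: field_simps)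
      finally show False using m \<open>m\<noteq>0\<close> by (simp add: MM_iff)
    qed
    thus ?thesis using a m by (auto simp: MM_iff)
  next
    case True thus ?thesis by (metis MM0)
  qed
qed
lemma MM_mult2: "m \<in> MM \<Longrightarrow> a \<in> OL \<Longrightarrow> m * a \<in> MM"
  using MM_mult by (simp add: mult.commute)
lemma MM_add[intro]: "m1 \<in> MM \<Longrightarrow> m2 \<in> MM \<Longrightarrow> m1 + m2 \<in> MM"
proof -
  assume a: "m1 \<in> MM" "m2 \<in> MM"
  show ?thesis
  proof (cases "m1 = 0 \<or> m2 = 0")
    case True thus ?thesis using a by auto
  next
    case False
    hence nz: "m1 \<noteq> 0" "m2 \<noteq> 0" by auto
    hence "m1/m2 \<noteq> 0" by simp
    from O_total[OF this] show ?thesis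
    proof
      assume "m1/m2 \<in> OL"
      hence "(1 + m1/m2) * m2 \<in> MM" using a by (intro MM_mult O_add) auto
      moreover have "(1 + m1/m2) * m2 = m1 + m2" using nz by (simp add: field_simps)
      ultimately show ?thesis by simp
    next
      assume "inverse (m1/m2) \<in> OL"
      hence "(1 + m2/m1) * m1 \<in> MM" using a by (intro MM_mult O_add) (auto simp: inverse_divide)
      moreover have "(1 + m2/m1) * m1 = m1 + m2" using nz by (simp add: field_simps)
      ultimately show ?thesis by simp
    qed
  qed
qed
lemma MM_uminus[intro]: "m \<in> MM \<Longrightarrow> - m \<in> MM"
  using MM_mult[of "-1" m] O_uminus[OF O1] by simp
lemma MM_diff[intro]: "m1 \<in> MM \<Longrightarrow> m2 \<in> MM \<Longrightarrow> m1 - m2 \<in> MM"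
  using MM_add[of m1 "-m2"] by auto
lemma MM_sum[intro]: "(\<And>i. i \<in> S \<Longrightarrow> f i \<in> MM) \<Longrightarrow> sum f S \<in> MM"
  by (induction S rule: infinite_finite_induct) auto
lemma MM_pow[intro]: "m \<in> MM \<Longrightarrow> k \<ge> 1 \<Longrightarrow> m ^ k \<in> MM"
  by (induction k) (auto intro!: MM_mult2 O_pow simp: Suc_le_eq)
lemma notO_inv: "x \<notin> OL \<Longrightarrow> inverse x \<in> MM"
  using O_total[of x] by (cases "x = 0") (auto simp: MM_iff)
lemma unit_inv: "x \<in> OL \<Longrightarrow> x \<notin> MM \<Longrightarrow> inverse x \<in> OL"
  by (auto simp: MM_iff)
lemma onepM_notM: "m \<in> MM \<Longrightarrow> 1 + m \<notin> MM"
proof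
  assume "m \<in> MM" "1 + m \<in> MM"
  hence "(1 + m) - m \<in> MM" by blast
  thus False by simp
qed
lemma onepM_nz: "m \<in> MM \<Longrightarrow> 1 + m \<noteq> 0"
  by (metis MM0 onepM_notM)
lemma onepM_inv: "m \<in> MM \<Longrightarrow> inverse (1 + m) \<in> OL"
  using unit_inv[of "1+m"] onepM_notM[of m] O_add[OF O1 MM_O[of m]] by simp
lemma MM_of_nat: "m \<in> MM \<Longrightarrow> of_nat N * m \<in> MM" using MM_mult[OF O_of_nat] .

lemma val_le_iff: "val_le OL u v \<longleftrightarrow> (u = 0 \<longrightarrow> v = 0) \<and> (u \<noteq> 0 \<longrightarrow> v / u \<in> OL)"
  by (simp add: val_le_def)


lemma nat_nz: "N \<ge> 1 \<Longrightarrow> (of_nat N :: 'a) \<noteq> 0" by simp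

lemma close_refl[simp]: "close N x x"
  unfolding close_def by (rule bexI[of _ 0]) auto
lemma close_0L[simp]: "close N 0 y \<longleftrightarrow> y = 0"
  unfolding close_def by auto
lemma close_0R[simp]: "close N x 0 \<longleftrightarrow> x = 0"
proof
  assume "close N x 0"
  then obtain m where m: "m \<in> MM" "0 = x * (1 + of_nat N * m)"
    unfolding close_def by (auto simp: algebra_simps)
  have "1 + of_nat N * m \<noteq> 0" using m(1) by (intro onepM_nz) blast
  thus "x = 0" using m(2) by simp
qed simp
lemma closeE: assumes "close N x y" obtains m where "m \<in> MM" "y = x * (1 + of_nat N * m)"
  using assms unfolding close_def by (auto simp: algebra_simps)
lemma closeI: "m \<in> MM \<Longrightarrow> y = x * (1 + of_nat N * m) \<Longrightarrow> close N x y"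
  unfolding close_def by (auto simp: algebra_simps)
lemma close_sym: assumes "close N x y" shows "close N y x"
proof -
  obtain m where m: "m \<in> MM" "y = x * (1 + of_nat N * m)" using assms by (rule closeE)
  have nm: "of_nat N * m \<in> MM" using m by blast
  have nz: "1 + of_nat N * m \<noteq> 0" using onepM_nz[OF nm] .
  define m' where "m' = - m * inverse (1 + of_nat N * m)"
  have "m' \<in> MM" unfolding m'_def using m(1) onepM_inv[OF nm] by (intro MM_mult2) auto
  moreover have "x = y * (1 + of_nat N * m')"
    unfolding m'_def m(2) using nz by (simp add: field_simps)
  ultimately show ?thesis by (rule closeI)
qed
lemma close_trans: assumes "close N x y" "close N y z" shows "close N x z"
proof -
  obtain m1 where m1: "m1 \<in> MM" "y = x * (1 + of_nat N * m1)" using assms(1) by (rule closeE)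
  obtain m2 where m2: "m2 \<in> MM" "z = y * (1 + of_nat N * m2)" using assms(2) by (rule closeE)
  have "m1 + m2 + of_nat N * m1 * m2 \<in> MM" using m1 m2 by (intro MM_add MM_mult O_mult) auto
  moreover have "z = x * (1 + of_nat N * (m1 + m2 + of_nat N * m1 * m2))"
    unfolding m2 m1 by (simp add: algebra_simps)
  ultimately show ?thesis by (rule closeI)
qed
lemma close_mult: assumes "close N x x'" "close N y y'" shows "close N (x*y) (x'*y')"
proof -
  obtain m1 where m1: "m1 \<in> MM" "x' = x * (1 + of_nat N * m1)" using assms(1) by (rule closeE)
  obtain m2 where m2: "m2 \<in> MM" "y' = y * (1 + of_nat N * m2)" using assms(2) by (rule closeE)
  have "m1 + m2 + of_nat N * m1 * m2 \<in> MM" using m1 m2 by (intro MM_add MM_mult O_mult) auto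
  moreover have "x'*y' = (x*y) * (1 + of_nat N * (m1 + m2 + of_nat N * m1 * m2))"
    unfolding m2 m1 by (simp add: algebra_simps)
  ultimately show ?thesis by (rule closeI)
qed
lemma close_pow: "close N x x' \<Longrightarrow> close N (x^k) (x'^k)"
  by (induction k) (auto intro: close_mult)
lemma close_cmult: "close N x x' \<Longrightarrow> close N (c*x) (c*x')"
  using close_mult[OF close_refl] by blast
lemma close_dvd: assumes "N dvd N'" "close N' x y" shows "close N x y"
proof -
  obtain q where q: "N' = N * q" using assms(1) by blast
  obtain m where m: "m \<in> MM" "y = x * (1 + of_nat N' * m)" using assms(2) by (rule closeE)
  have "of_nat q * m \<in> MM" using m by blast
  moreover have "y = x * (1 + of_nat N * (of_nat q * m))" using m q by (simp add: algebra_simps)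
  ultimately show ?thesis by (rule closeI)
qed
lemma val_le_close2: assumes "close N v v'" "val_le OL u v" shows "val_le OL u v'"
proof -
  obtain m where m: "m \<in> MM" "v' = v * (1 + of_nat N * m)" using assms(1) by (rule closeE)
  show ?thesis
  proof (cases "u = 0")
    case True thus ?thesis using assms m by (auto simp: val_le_iff)
  next
    case False
    hence "v/u \<in> OL" using assms by (auto simp: val_le_iff)
    hence "(v/u) * (1 + of_nat N * m) \<in> OL" using m by (intro O_mult O_add) auto
    thus ?thesis using False m by (auto simp: val_le_iff)
  qed
qed
lemma val_le_close1: assumes "close N u u'" "val_le OL u v" shows "val_le OL u' v"
proof -
  obtain m where m: "m \<in> MM" "u' = u * (1 + of_nat N * m)" using assms(1) by (rule closeE)
  have nm: "of_nat N * m \<in> MM" using m by blast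
  have nz: "1 + of_nat N * m \<noteq> 0" using onepM_nz[OF nm] .
  show ?thesis
  proof (cases "u = 0")
    case True thus ?thesis using assms m by (auto simp: val_le_iff)
  next
    case False
    hence "v/u \<in> OL" using assms by (auto simp: val_le_iff)
    hence "(v/u) * inverse (1 + of_nat N * m) \<in> OL" using onepM_inv[OF nm] by (intro O_mult)
    moreover have "u' \<noteq> 0" using m(2) nz False by simp
    ultimately show ?thesis using False m nz by (auto simp: val_le_iff field_simps)
  qed
qed

lemma K0[simp]: "0 \<in> K" and K1[simp]: "1 \<in> K"
  using subK by (auto simp: subfield_def)
lemma K_add[intro]: "x \<in> K \<Longrightarrow> y \<in> K \<Longrightarrow> x + y \<in> K"
  using subK by (auto simp: subfield_def)
lemma K_diff[intro]: "x \<in> K \<Longrightarrow> y \<in> K \<Longrightarrow> x - y \<in> K"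
  using subK by (auto simp: subfield_def)
lemma K_mult[intro]: "x \<in> K \<Longrightarrow> y \<in> K \<Longrightarrow> x * y \<in> K"
  using subK by (auto simp: subfield_def)
lemma K_inv[intro]: "x \<in> K \<Longrightarrow> inverse x \<in> K"
  using subK by (auto simp: subfield_def)
lemma K_div[intro]: "x \<in> K \<Longrightarrow> y \<in> K \<Longrightarrow> x / y \<in> K"
  using K_mult[OF _ K_inv] by (simp add: divide_inverse)
lemma K_uminus[intro]: "x \<in> K \<Longrightarrow> - x \<in> K"
  using K_diff[of 0 x] by simp
lemma K_of_nat[intro,simp]: "of_nat n \<in> K"
  by (induction n) (auto simp: K_add)
lemma K_pow[intro!]: "x \<in> K \<Longrightarrow> x ^ k \<in> K"
  by (induction k) auto
lemma K_sum[intro]: "(\<And>i. i \<in> S \<Longrightarrow> f i \<in> K) \<Longrightarrow> sum f S \<in> K"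
  by (induction S rule: infinite_finite_induct) auto

lemma maxid_K: "maxid K (K \<inter> OL) = K \<inter> MM"
  by (auto simp: maxid_def)

lemma rv_L: "rv UNIV OL N x = {y. close N x y}"
proof (cases "x = 0")
  case True thus ?thesis by (auto simp: rv_def)
next
  case False
  have "y / x \<in> (\<lambda>m. 1 + of_nat N * m) ` MM \<longleftrightarrow> close N x y" for y
  proof
    assume "y / x \<in> (\<lambda>m. 1 + of_nat N * m) ` MM"
    then obtain m where "m \<in> MM" "y / x = 1 + of_nat N * m" by auto
    thus "close N x y" using False by (intro closeI[of m]) (auto simp: field_simps)
  next
    assume "close N x y"
    then obtain m where "m \<in> MM" "y = x * (1 + of_nat N * m)" by (rule closeE)
    thus "y / x \<in> (\<lambda>m. 1 + of_nat N * m) ` MM" using False by auto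
  qed
  thus ?thesis using False by (auto simp: rv_def)
qed

lemma rv_K: assumes "x \<in> K" "N \<ge> 1" shows "rv K (K \<inter> OL) N x = K \<inter> {y. close N x y}"
proof (cases "x = 0")
  case True thus ?thesis by (auto simp: rv_def)
next
  case False
  have "y / x \<in> (\<lambda>m. 1 + of_nat N * m) ` (K \<inter> MM) \<longleftrightarrow> close N x y" if y: "y \<in> K" for y
  proof
    assume "y / x \<in> (\<lambda>m. 1 + of_nat N * m) ` (K \<inter> MM)"
    then obtain m where "m \<in> MM" "y / x = 1 + of_nat N * m" by auto
    thus "close N x y" using False by (intro closeI[of m]) (auto simp: field_simps)
  next
    assume "close N x y"
    then obtain m where m: "m \<in> MM" "y = x * (1 + of_nat N * m)" by (rule closeE)
    have "m = (y / x - 1) / of_nat N" using m False assms(2) by (simp add: field_simps)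
    also have "\<dots> \<in> K" using y assms by (intro K_div K_diff) auto
    finally have mK: "m \<in> K" .
    have "y / x = 1 + of_nat N * m" using m False by simp
    thus "y / x \<in> (\<lambda>m. 1 + of_nat N * m) ` (K \<inter> MM)" using mK m(1) by blast
  qed
  moreover have "rv K (K \<inter> OL) N x = {y \<in> K. y / x \<in> (\<lambda>m. 1 + of_nat N * m) ` (K \<inter> MM)}"
    using False by (simp add: rv_def maxid_K)
  ultimately show ?thesis by blast
qed

lemma rv_L_eq: "rv UNIV OL N x = rv UNIV OL N y \<longleftrightarrow> close N x y"
proof
  assume e: "rv UNIV OL N x = rv UNIV OL N y"
  have "y \<in> rv UNIV OL N y" unfolding rv_L by simp
  hence "y \<in> rv UNIV OL N x" using e by simp
  thus "close N x y" unfolding rv_L by simp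
next
  assume c: "close N x y"
  have "close N x z \<longleftrightarrow> close N y z" for z
    using close_trans[OF c, of z] close_trans[OF close_sym[OF c], of z] by blast
  thus "rv UNIV OL N x = rv UNIV OL N y" unfolding rv_L by auto
qed

lemma rv_K_eq: assumes "x \<in> K" "y \<in> K" "N \<ge> 1"
  shows "rv K (K \<inter> OL) N x = rv K (K \<inter> OL) N y \<longleftrightarrow> close N x y"
proof
  assume e: "rv K (K \<inter> OL) N x = rv K (K \<inter> OL) N y"
  have "y \<in> rv K (K \<inter> OL) N y" using rv_K[OF assms(2,3)] assms(2) by simp
  hence "y \<in> rv K (K \<inter> OL) N x" using e by simp
  thus "close N x y" using rv_K[OF assms(1,3)] by simp
next
  assume c: "close N x y"
  show "rv K (K \<inter> OL) N x = rv K (K \<inter> OL) N y"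
  proof -
    have "close N x z \<longleftrightarrow> close N y z" for z
      using close_trans[OF c, of z] close_trans[OF close_sym[OF c], of z] by blast
    thus ?thesis unfolding rv_K[OF assms(1,3)] rv_K[OF assms(2,3)] by auto
  qed
qed

lemma val_le_K: "u \<in> K \<Longrightarrow> v \<in> K \<Longrightarrow> val_le (K \<inter> OL) u v \<longleftrightarrow> val_le OL u v"
  by (auto simp: val_le_def)

lemma rv_incl_rv: assumes "x \<in> K" "N \<ge> 1"
  shows "rv_incl K OL N (rv K (K \<inter> OL) N x) = rv UNIV OL N x"
proof -
  define P where "P = (\<lambda>x'. x' \<in> K \<and> rv K (K \<inter> OL) N x' = rv K (K \<inter> OL) N x)"
  have "P x" using assms by (simp add: P_def)
  hence "P (SOME x'. P x')" by (rule someI)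
  moreover obtain x0 where x0: "x0 = (SOME x'. P x')" by blast
  ultimately have "x0 \<in> K" "rv K (K \<inter> OL) N x0 = rv K (K \<inter> OL) N x" unfolding P_def by auto
  hence "close N x0 x" using rv_K_eq[of x0 x N] assms by simp
  hence "rv UNIV OL N x0 = rv UNIV OL N x" using rv_L_eq[of N x0 x] by simp
  thus ?thesis unfolding rv_incl_def P_def[symmetric] x0[symmetric] .
qed

end

context vf begin

lemma min_val_exists:
  assumes "finite S" "\<exists>j\<in>S. c j \<noteq> 0"
  shows "\<exists>k\<in>S. c k \<noteq> 0 \<and> (\<forall>j\<in>S. c j / c k \<in> OL)"
  using assms
proof (induction S rule: finite_induct)
  case empty thus ?case by simp
next
  case (insert x F)
  show ?case
  proof (cases "\<exists>j\<in>F. c j \<noteq> 0")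
    case False
    hence "c x \<noteq> 0" using insert.prems by auto
    thus ?thesis using False by (intro bexI[of _ x]) auto
  next
    case True
    then obtain k where k: "k \<in> F" "c k \<noteq> 0" "\<forall>j\<in>F. c j / c k \<in> OL" using insert.IH by blast
    show ?thesis
    proof (cases "c x / c k \<in> OL")
      case True thus ?thesis using k by (intro bexI[of _ k]) auto
    next
      case False
      hence cx: "c x \<noteq> 0" by auto
      have inv: "c k / c x \<in> OL" using O_total[of "c x / c k"] False k(2) cx by (auto simp: inverse_divide)
      have "c j / c x \<in> OL" if "j \<in> insert x F" for j
      proof (cases "j = x")
        case True thus ?thesis using cx by simp
      next
        case False
        hence "j \<in> F" using that by auto
        hence "(c j / c k) * (c k / c x) \<in> OL" using k inv by (intro O_mult) auto
        thus ?thesis using k(2) by simp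
      qed
      thus ?thesis using cx by (intro bexI[of _ x]) auto
    qed
  qed
qed

lemma descent:
  assumes S: "finite S" and cK: "\<forall>j\<in>S. c j \<in> K" and sK: "s \<in> K"
    and mM: "\<forall>j\<in>S. m j \<in> MM" and s: "s = (\<Sum>j\<in>S. c j * m j)"
  shows "\<exists>m'. (\<forall>j\<in>S. m' j \<in> K \<and> m' j \<in> MM) \<and> s = (\<Sum>j\<in>S. c j * m' j)"
proof (cases "\<exists>j\<in>S. c j \<noteq> 0")
  case False
  hence "s = 0" using s by simp
  thus ?thesis using False by (intro exI[of _ "\<lambda>_. 0"]) auto
next
  case True
  then obtain k where k: "k \<in> S" "c k \<noteq> 0" "\<forall>j\<in>S. c j / c k \<in> OL"
    using min_val_exists[OF S] by blast
  define \<mu> where "\<mu> = s / c k"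
  have "\<mu> = (\<Sum>j\<in>S. (c j / c k) * m j)" unfolding \<mu>_def s
    by (simp add: sum_divide_distrib)
  also have "\<dots> \<in> MM" using k mM by (intro MM_sum MM_mult) auto
  finally have \<mu>M: "\<mu> \<in> MM" .
  have \<mu>K: "\<mu> \<in> K" unfolding \<mu>_def using sK cK k by (intro K_div) auto
  define m' where "m' = (\<lambda>j. if j = k then \<mu> else 0)"
  have "(\<Sum>j\<in>S. c j * m' j) = c k * \<mu>"
    unfolding m'_def using k(1) S by (simp add: if_distrib sum.delta cong: if_cong)
  also have "\<dots> = s" unfolding \<mu>_def using k(2) by simp
  finally show ?thesis using \<mu>M \<mu>K by (intro exI[of _ m']) (auto simp: m'_def)
qed

lemma RV_K_obtain: assumes "\<xi> \<in> RV K (K \<inter> OL) N" obtains a where "a \<in> K" "\<xi> = rv K (K \<inter> OL) N a"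
  using assms unfolding RV_def by blast

lemma mult_K: assumes "a \<in> K" "b \<in> K" "c \<in> K" "N \<ge> 1"
  shows "rv_mult_graph K (K \<inter> OL) N (rv K (K \<inter> OL) N a) (rv K (K \<inter> OL) N b) (rv K (K \<inter> OL) N c)
     \<longleftrightarrow> close N (a*b) c"
proof
  assume "rv_mult_graph K (K \<inter> OL) N (rv K (K \<inter> OL) N a) (rv K (K \<inter> OL) N b) (rv K (K \<inter> OL) N c)"
  then obtain x y where xy: "x \<in> K" "y \<in> K" "close N x a" "close N y b" "close N (x*y) c"
    unfolding rv_mult_graph_def using rv_K_eq assms K_mult by metis
  have "close N (a*b) (x*y)" using close_mult[OF close_sym[OF xy(3)] close_sym[OF xy(4)]] .
  thus "close N (a*b) c" using close_trans xy(5) by blast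
next
  assume "close N (a*b) c"
  thus "rv_mult_graph K (K \<inter> OL) N (rv K (K \<inter> OL) N a) (rv K (K \<inter> OL) N b) (rv K (K \<inter> OL) N c)"
    unfolding rv_mult_graph_def using assms rv_K_eq K_mult by metis
qed

lemma mult_L: 
  shows "rv_mult_graph UNIV OL N (rv UNIV OL N a) (rv UNIV OL N b) (rv UNIV OL N c)
     \<longleftrightarrow> close N (a*b) c"
proof
  assume "rv_mult_graph UNIV OL N (rv UNIV OL N a) (rv UNIV OL N b) (rv UNIV OL N c)"
  then obtain x y where xy: "close N x a" "close N y b" "close N (x*y) c"
    unfolding rv_mult_graph_def using rv_L_eq by metis
  have "close N (a*b) (x*y)" using close_mult[OF close_sym[OF xy(1)] close_sym[OF xy(2)]] .
  thus "close N (a*b) c" using close_trans xy(3) by blast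
next
  assume "close N (a*b) c"
  thus "rv_mult_graph UNIV OL N (rv UNIV OL N a) (rv UNIV OL N b) (rv UNIV OL N c)"
    unfolding rv_mult_graph_def using rv_L_eq by blast
qed

lemma dvd_K: assumes "a \<in> K" "b \<in> K" "N \<ge> 1"
  shows "rv_dvd K (K \<inter> OL) N (rv K (K \<inter> OL) N a) (rv K (K \<inter> OL) N b) \<longleftrightarrow> val_le OL a b"
proof
  assume "rv_dvd K (K \<inter> OL) N (rv K (K \<inter> OL) N a) (rv K (K \<inter> OL) N b)"
  then obtain x y where xy: "x \<in> K" "y \<in> K" "close N x a" "close N y b" "val_le OL x y"
    unfolding rv_dvd_def using rv_K_eq assms val_le_K by metis
  show "val_le OL a b" using val_le_close1[OF xy(3) val_le_close2[OF xy(4) xy(5)]] .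
next
  assume "val_le OL a b"
  thus "rv_dvd K (K \<inter> OL) N (rv K (K \<inter> OL) N a) (rv K (K \<inter> OL) N b)"
    unfolding rv_dvd_def using assms val_le_K by blast
qed

lemma dvd_L: 
  shows "rv_dvd UNIV OL N (rv UNIV OL N a) (rv UNIV OL N b) \<longleftrightarrow> val_le OL a b"
proof
  assume "rv_dvd UNIV OL N (rv UNIV OL N a) (rv UNIV OL N b)"
  then obtain x y where xy: "close N x a" "close N y b" "val_le OL x y"
    unfolding rv_dvd_def using rv_L_eq by metis
  show "val_le OL a b" using val_le_close1[OF xy(1) val_le_close2[OF xy(2) xy(3)]] .
next
  assume "val_le OL a b"
  thus "rv_dvd UNIV OL N (rv UNIV OL N a) (rv UNIV OL N b)"
    unfolding rv_dvd_def by blast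
qed

lemma NM_K: assumes "a \<in> K" "b \<in> K" "N \<ge> 1" "N' \<ge> 1" "N dvd N'"
  shows "rv_NM_graph K (K \<inter> OL) N N' (rv K (K \<inter> OL) N' a) (rv K (K \<inter> OL) N b) \<longleftrightarrow> close N a b"
proof
  assume "rv_NM_graph K (K \<inter> OL) N N' (rv K (K \<inter> OL) N' a) (rv K (K \<inter> OL) N b)"
  then obtain x where x: "x \<in> K" "close N' x a" "close N x b"
    unfolding rv_NM_graph_def using rv_K_eq assms by metis
  have "close N a x" using close_sym[OF close_dvd[OF assms(5) x(2)]] .
  thus "close N a b" using close_trans x(3) by blast
next
  assume "close N a b"
  thus "rv_NM_graph K (K \<inter> OL) N N' (rv K (K \<inter> OL) N' a) (rv K (K \<inter> OL) N b)"
    unfolding rv_NM_graph_def using assms rv_K_eq by blast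
qed

lemma NM_L: assumes "N dvd N'"
  shows "rv_NM_graph UNIV OL N N' (rv UNIV OL N' a) (rv UNIV OL N b) \<longleftrightarrow> close N a b"
proof
  assume "rv_NM_graph UNIV OL N N' (rv UNIV OL N' a) (rv UNIV OL N b)"
  then obtain x where x: "close N' x a" "close N x b"
    unfolding rv_NM_graph_def using rv_L_eq by metis
  have "close N a x" using close_sym[OF close_dvd[OF assms x(1)]] .
  thus "close N a b" using close_trans x(2) by blast
next
  assume "close N a b"
  thus "rv_NM_graph UNIV OL N N' (rv UNIV OL N' a) (rv UNIV OL N b)"
    unfolding rv_NM_graph_def using rv_L_eq by blast
qed

end

context vf begin

lemma oplus_K: assumes "a1 \<in> K" "a2 \<in> K" "a3 \<in> K" "N \<ge> 1"
  shows "rv_oplus K (K \<inter> OL) N (rv K (K \<inter> OL) N a1) (rv K (K \<inter> OL) N a2) (rv K (K \<inter> OL) N a3)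
    \<longleftrightarrow> (\<exists>y1 y2 y3. y1 \<in> K \<and> y2 \<in> K \<and> y3 \<in> K \<and> close N a1 y1 \<and> close N a2 y2 \<and> close N a3 y3 \<and> y1 + y2 = y3)"
  unfolding rv_oplus_def using assms rv_K_eq[OF _ _ assms(4)] close_sym by metis

lemma oplus_L:
  shows "rv_oplus UNIV OL N (rv UNIV OL N a1) (rv UNIV OL N a2) (rv UNIV OL N a3)
    \<longleftrightarrow> (\<exists>y1 y2 y3. close N a1 y1 \<and> close N a2 y2 \<and> close N a3 y3 \<and> y1 + y2 = y3)"
  unfolding rv_oplus_def using rv_L_eq close_sym by (metis UNIV_I)

lemma oplus_desc: assumes K: "a1 \<in> K" "a2 \<in> K" "a3 \<in> K" and N: "N \<ge> 1"
  and "close N a1 y1" "close N a2 y2" "close N a3 y3" "y1 + y2 = y3"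
  shows "\<exists>y1 y2 y3. y1 \<in> K \<and> y2 \<in> K \<and> y3 \<in> K \<and> close N a1 y1 \<and> close N a2 y2 \<and> close N a3 y3 \<and> y1 + y2 = y3"
proof -
  let ?n = "of_nat N :: 'a"
  have n0: "?n \<noteq> 0" using N by simp
  obtain m1 where m1: "m1 \<in> MM" "y1 = a1 * (1 + ?n * m1)" using assms(5) by (rule closeE)
  obtain m2 where m2: "m2 \<in> MM" "y2 = a2 * (1 + ?n * m2)" using assms(6) by (rule closeE)
  obtain m3 where m3: "m3 \<in> MM" "y3 = a3 * (1 + ?n * m3)" using assms(7) by (rule closeE)
  define s where "s = (a3 - a1 - a2) / ?n"
  define c where "c = (\<lambda>j::nat. if j = 0 then a1 else if j = 1 then a2 else a3)"
  define m where "m = (\<lambda>j::nat. if j = 0 then m1 else if j = 1 then m2 else - m3)"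
  have sum3: "(\<Sum>j\<in>{0,1,2::nat}. f j) = f 0 + f 1 + f 2" for f :: "nat \<Rightarrow> 'a" by simp
  have "a1 * (1 + ?n * m1) + a2 * (1 + ?n * m2) = a3 * (1 + ?n * m3)" using m1 m2 m3 assms(8) by simp
  hence "s = a1 * m1 + a2 * m2 + a3 * (- m3)" unfolding s_def using n0
    by (simp add: field_simps)
  hence s: "s = (\<Sum>j\<in>{0,1,2}. c j * m j)" unfolding sum3 c_def m_def by simp
  have sK: "s \<in> K" unfolding s_def using K by (intro K_div K_diff) auto
  obtain m' where m': "\<forall>j\<in>{0,1,2::nat}. m' j \<in> K \<and> m' j \<in> MM" "s = (\<Sum>j\<in>{0,1,2}. c j * m' j)"
    using descent[of "{0,1,2::nat}" c s m] s sK K m1 m2 m3 by (auto simp: c_def m_def)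
  have s': "s = a1 * m' 0 + a2 * m' 1 + a3 * m' 2" using m'(2) unfolding sum3 c_def by simp
  define z1 where "z1 = a1 * (1 + ?n * m' 0)"
  define z2 where "z2 = a2 * (1 + ?n * m' 1)"
  define z3 where "z3 = a3 * (1 + ?n * (- m' 2))"
  have "z1 + z2 = z3"
  proof -
    have "?n * s = a3 - a1 - a2" unfolding s_def using n0 by simp
    thus ?thesis unfolding z1_def z2_def z3_def s' by (simp add: algebra_simps)
  qed
  moreover have "z1 \<in> K" "z2 \<in> K" "z3 \<in> K" unfolding z1_def z2_def z3_def using K m'
    by (auto intro!: K_mult K_add K_uminus)
  moreover have "close N a1 z1" unfolding z1_def using m' by (intro closeI[of "m' 0"]) auto
  moreover have "close N a2 z2" unfolding z2_def using m' by (intro closeI[of "m' 1"]) auto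
  moreover have "close N a3 z3" unfolding z3_def using m' by (intro closeI[of "- m' 2"] MM_uminus) auto
  ultimately show ?thesis by blast
qed

end


lemma pderiv_sum': "pderiv (\<Sum>k\<in>A. p k) = (\<Sum>k\<in>A. pderiv (p k))"
  by (induction A rule: infinite_finite_induct) (auto simp: pderiv_add)

lemma sum_split01: "(n::nat) \<ge> 1 \<Longrightarrow> (\<Sum>k\<in>{0..n}. f k) = f 0 + f 1 + (\<Sum>k\<in>{2..n}. f k)"
proof -
  assume "n \<ge> 1"
  hence "{0..n} = insert 0 (insert 1 {2..n})" by auto
  thus ?thesis by (simp add: add.assoc)
qed

lemma sum_split0: "(\<Sum>k\<in>{0..n::nat}. f k) = f 0 + (\<Sum>k\<in>{1..n}. f k)"
proof -
  have "{0..n} = insert 0 {1..n}" by auto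
  thus ?thesis by simp
qed

context vf begin

lemma hensel_gen:
  assumes n: "n \<ge> 1" and c: "\<forall>k\<le>n. c k \<in> K \<and> c k \<in> OL" and c0: "c 0 \<in> MM" and c1: "c 1 = 1"
  shows "\<exists>t. t \<in> K \<and> t \<in> MM \<and> (\<Sum>k\<in>{0..n}. c k * t ^ k) = 0"
proof (cases "c 0 = 0")
  case True
  have "(\<Sum>k\<in>{0..n}. c k * 0 ^ k) = 0" unfolding sum_split0 using True by simp
  thus ?thesis by (intro exI[of _ 0]) auto
next
  case False
  define e where "e = (\<lambda>k. c k * (- c 0) ^ k / c 0)"
  have e0: "e 0 = 1" using False by (simp add: e_def)
  have e1: "e 1 = -1" using False c1 by (simp add: e_def)
  have eK: "e k \<in> K" if "k \<le> n" for k using c that unfolding e_def by (intro K_div K_mult K_pow K_uminus) auto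
  have eM: "e k \<in> MM" if "k \<le> n" "k \<ge> 2" for k
  proof -
    have "e k = c k * (- 1) * (- c 0) ^ (k - 1)" unfolding e_def using False that
      by (cases k) (auto simp: field_simps)
    also have "\<dots> \<in> MM" using c that c0 by (intro MM_mult MM_pow O_mult MM_uminus) auto
    finally show ?thesis .
  qed
  have eO: "e k \<in> OL" if "k \<le> n" for k
  proof (cases "k \<ge> 2")
    case True thus ?thesis using eM that by blast
  next
    case False hence "k = 0 \<or> k = 1" by auto
    thus ?thesis using e0 e1 O_uminus[OF O1] by auto
  qed
  define H where "H = (\<Sum>k\<in>{0..n}. monom (e k) (n - k))"
  have coeffH: "coeff H i = (\<Sum>k\<in>{0..n}. if n - k = i then e k else 0)" for i
    unfolding H_def coeff_sum by (simp add: eq_commute)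
  have coeffH_KO: "coeff H i \<in> K \<inter> OL" for i
    unfolding coeffH using eK eO by (intro IntI K_sum O_sum) auto
  have degH: "degree H \<le> n" unfolding H_def
    by (rule degree_sum_le) (auto intro: order.trans[OF degree_monom_le])
  have "coeff H n = (\<Sum>k\<in>{0..n}. if k = 0 then e k else 0)" unfolding coeffH
    using n by (intro sum.cong) auto
  also have "\<dots> = 1" using e0 by (simp add: sum.delta)
  finally have cHn: "coeff H n = 1" .
  hence "degree H = n" using degH le_degree[of H n] by simp
  hence lead: "lead_coeff H = 1" using cHn by simp
  have polyH: "poly H x = (\<Sum>k\<in>{0..n}. e k * x ^ (n - k))" for x
    unfolding H_def poly_sum poly_monom ..
  have "poly H 1 = e 0 + e 1 + (\<Sum>k\<in>{2..n}. e k)" unfolding polyH using sum_split01[OF n] by simp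
  also have "\<dots> \<in> MM" unfolding e0 e1 using eM by (auto intro!: MM_sum)
  finally have pH1: "poly H 1 \<in> K \<inter> MM" using eK by (auto simp: polyH intro!: K_sum)
  have "pderiv H = (\<Sum>k\<in>{0..n}. monom (of_nat (n - k) * e k) (n - k - 1))"
    unfolding H_def pderiv_sum' pderiv_monom ..
  hence pdH: "poly (pderiv H) 1 = (\<Sum>k\<in>{0..n}. of_nat (n - k) * e k)"
    by (simp add: poly_sum poly_monom)
  also have "\<dots> = of_nat n * e 0 + of_nat (n - 1) * e 1 + (\<Sum>k\<in>{2..n}. of_nat (n - k) * e k)"
    by (subst sum_split01[OF n]) simp
  also have "\<dots> = 1 + (\<Sum>k\<in>{2..n}. of_nat (n - k) * e k)" unfolding e0 e1 using n
    by (simp add: of_nat_diff)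
  finally have "poly (pderiv H) 1 = 1 + (\<Sum>k\<in>{2..n}. of_nat (n - k) * e k)" .
  moreover have "(\<Sum>k\<in>{2..n}. of_nat (n - k) * e k) \<in> MM" using eM by (auto intro!: MM_sum MM_mult)
  ultimately have pdH1: "poly (pderiv H) 1 \<notin> K \<inter> MM" using onepM_notM by auto
  have "\<exists>W\<in>K \<inter> OL. poly H W = 0 \<and> W - 1 \<in> maxid K (K \<inter> OL)"
    using henK unfolding henselian_def
    using coeffH_KO lead pH1 pdH1 by (auto simp: maxid_K)
  then obtain W where W: "W \<in> K" "W \<in> OL" "poly H W = 0" "W - 1 \<in> MM" by (auto simp: maxid_K)
  have W1: "W = 1 + (W - 1)" by simp
  have Wnz: "W \<noteq> 0" using onepM_nz[OF W(4)] W1 by metis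
  have Winv: "inverse W \<in> OL" using onepM_inv[OF W(4)] W1 by metis
  define t where "t = - c 0 * inverse W"
  have tK: "t \<in> K" unfolding t_def using c W by (intro K_mult K_uminus K_inv) auto
  have tM: "t \<in> MM" unfolding t_def using c0 Winv by (intro MM_mult2 MM_uminus)
  have "c k * t ^ k = c 0 / W ^ n * (e k * W ^ (n - k))" if "k \<in> {0..n}" for k
  proof -
    have "W ^ n = W ^ (n - k) * W ^ k" using that by (simp flip: power_add)
    moreover have "W ^ k * (- (c 0 / W)) ^ k = (- c 0) ^ k"
      unfolding power_mult_distrib[symmetric] using Wnz by simp
    ultimately show ?thesis unfolding t_def e_def using False Wnz
      by (simp add: field_simps power_mult_distrib)
  qed
  hence "(\<Sum>k\<in>{0..n}. c k * t ^ k) = c 0 / W ^ n * poly H W"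
    unfolding polyH sum_distrib_left by (rule sum.cong[OF refl])
  also have "\<dots> = 0" using W by simp
  finally show ?thesis using tK tM by blast
qed

end

context vf begin

lemma binom_ext:
  fixes z :: 'a
  assumes "i \<le> d"
  shows "(1 + z) ^ i = (\<Sum>k=0..d. of_nat (i choose k) * z ^ k)"
proof -
  have "(1 + z) ^ i = (z + 1) ^ i" by (simp add: add.commute)
  also have "\<dots> = (\<Sum>k=0..i. of_nat (i choose k) * z ^ k)"
    using binomial_ring[of z 1 i] by (simp add: atLeast0AtMost)
  also have "\<dots> = (\<Sum>k=0..d. of_nat (i choose k) * z ^ k)"
    using assms by (intro sum.mono_neutral_left) auto
  finally show ?thesis .
qed

lemma taylor:
  fixes E :: "nat \<Rightarrow> 'a" and n t :: 'a
  shows "(\<Sum>i=0..d. E i * (1 + n * t) ^ i) = (\<Sum>k=0..d. n ^ k * (\<Sum>i=0..d. of_nat (i choose k) * E i) * t ^ k)"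
proof -
  have "(\<Sum>i=0..d. E i * (1 + n * t) ^ i) = (\<Sum>i=0..d. \<Sum>k=0..d. E i * (of_nat (i choose k) * (n * t) ^ k))"
    using binom_ext[of _ d "n * t"] by (simp add: sum_distrib_left)
  also have "\<dots> = (\<Sum>k=0..d. \<Sum>i=0..d. E i * (of_nat (i choose k) * (n * t) ^ k))"
    by (rule sum.swap)
  also have "\<dots> = (\<Sum>k=0..d. n ^ k * (\<Sum>i=0..d. of_nat (i choose k) * E i) * t ^ k)"
    by (intro sum.cong refl) (auto simp: sum_distrib_left sum_distrib_right power_mult_distrib mult_ac intro!: sum.cong)
  finally show ?thesis .
qed


lemma hensel_step:
  assumes N: "N \<ge> 1" and bK: "b \<in> K" and b0: "b \<noteq> 0" and aK: "\<forall>i\<le>d. \<alpha> i \<in> K"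
  and C1: "\<forall>i\<in>{1..d}. val_le OL (\<Sum>j=1..d. of_nat j * \<alpha> j * b^(j-1)) (of_nat N * (\<alpha> i * b^(i-1)))"
  and cx: "close N b x'" and cy: "\<forall>i\<le>d. close (N^2) (\<alpha> i * x'^i) (y i)" and s0: "(\<Sum>i=0..d. y i) = 0"
  shows "\<exists>x''\<in>K. close N b x'' \<and> (\<Sum>i=0..d. \<alpha> i * x''^i) = 0"
proof -
  define n :: 'a where "n = of_nat N"
  have n0: "n \<noteq> 0" using N by (simp add: n_def)
  have nO: "n \<in> OL" "n \<in> K" by (auto simp: n_def)
  obtain \<mu> where \<mu>: "\<mu> \<in> MM" "x' = b * (1 + n * \<mu>)" using cx unfolding n_def by (rule closeE)
  have "\<forall>i. \<exists>m. i \<le> d \<longrightarrow> m \<in> MM \<and> y i = \<alpha> i * x'^i * (1 + n^2 * m)"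
  proof
    fix i
    show "\<exists>m. i \<le> d \<longrightarrow> m \<in> MM \<and> y i = \<alpha> i * x'^i * (1 + n^2 * m)"
    proof (cases "i \<le> d")
      case True
      then obtain m where "m \<in> MM" "y i = \<alpha> i * x'^i * (1 + of_nat (N^2) * m)" using cy by (meson closeE)
      thus ?thesis unfolding n_def by auto
    qed auto
  qed
  then obtain mm where mm: "\<And>i. i \<le> d \<Longrightarrow> mm i \<in> MM \<and> y i = \<alpha> i * x'^i * (1 + n^2 * mm i)"
    by metis
  define E where "E = (\<lambda>i. \<alpha> i * b ^ i)"
  define u where "u = 1 + n * \<mu>"
  have uO: "u \<in> OL" unfolding u_def using \<mu> nO by (intro O_add O_mult) auto
  have EK: "E i \<in> K" if "i \<le> d" for i unfolding E_def using aK bK that by (intro K_mult K_pow) auto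
  have n2M: "n^2 * mm i \<in> MM" if "i \<le> d" for i using mm[OF that] nO by (intro MM_mult O_pow) auto
  have key0: "(\<Sum>i=0..d. E i * u^i * (1 + n^2 * mm i)) = 0"
  proof -
    have "(\<Sum>i=0..d. E i * u^i * (1 + n^2 * mm i)) = (\<Sum>i=0..d. y i)"
      using mm unfolding E_def u_def \<mu>(2) by (intro sum.cong refl) (auto simp: power_mult_distrib)
    thus ?thesis using s0 by simp
  qed
  show ?thesis
  proof (cases "\<forall>i\<in>{1..d}. E i = 0")
    case True
    have "E 0 * (1 + n^2 * mm 0) = 0" using key0 True unfolding sum_split0 by simp
    moreover have "1 + n^2 * mm 0 \<noteq> 0" using onepM_nz[OF n2M[of 0]] by simp
    ultimately have "E 0 = 0" by simp
    moreover have "(\<Sum>i=1..d. E i) = 0" using True by simp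
    ultimately have "(\<Sum>i=0..d. E i) = 0" unfolding sum_split0 by simp
    hence "(\<Sum>i=0..d. \<alpha> i * b^i) = 0" unfolding E_def .
    thus ?thesis using bK by (intro bexI[of _ b]) auto
  next
    case False
    then obtain k where k: "k \<in> {1..d}" "E k \<noteq> 0" "\<forall>j\<in>{1..d}. E j / E k \<in> OL"
      using min_val_exists[of "{1..d}" E] by auto
    define e where "e = E k"
    have e0: "e \<noteq> 0" using k by (simp add: e_def)
    have d1: "d \<ge> 1" using k by auto
    have "E 0 * (1 + n^2 * mm 0) = - (\<Sum>i=1..d. E i * u^i * (1 + n^2 * mm i))"
      using key0 unfolding sum_split0 by (simp add: add_eq_0_iff)
    hence "(E 0 / e) * (1 + n^2 * mm 0) = - (\<Sum>i=1..d. (E i / e) * u^i * (1 + n^2 * mm i))"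
      by (simp add: sum_divide_distrib[symmetric] field_simps)
    also have "\<dots> \<in> OL"
    proof -
      have "1 + n^2 * mm i \<in> OL" if "i \<le> d" for i using MM_O[OF n2M[OF that]] by (intro O_add O1)
      thus ?thesis using k uO unfolding e_def by (intro O_uminus O_sum O_mult O_pow) auto
    qed
    finally have X: "(E 0 / e) * (1 + n^2 * mm 0) \<in> OL" .
    have "(E 0 / e) * (1 + n^2 * mm 0) * inverse (1 + n^2 * mm 0) \<in> OL"
      using O_mult[OF X onepM_inv[OF n2M[of 0]]] by simp
    moreover have "1 + n^2 * mm 0 \<noteq> 0" using onepM_nz[OF n2M[of 0]] by simp
    ultimately have E0O: "E 0 / e \<in> OL" by (metis mult.assoc right_inverse mult_1_right)
    have EO: "E i / e \<in> OL" if "i \<le> d" for i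
      using that k E0O unfolding e_def by (cases "i = 0") auto
    define S1 where "S1 = (\<Sum>j=1..d. of_nat j * \<alpha> j * b^(j-1))"
    have "\<alpha> k \<noteq> 0" using k by (auto simp: E_def)
    hence w0: "n * (\<alpha> k * b^(k-1)) \<noteq> 0" using n0 b0 by simp
    have "val_le OL S1 (n * (\<alpha> k * b^(k-1)))" using C1 k unfolding S1_def n_def by blast
    hence S10: "S1 \<noteq> 0" and rO': "(n * (\<alpha> k * b^(k-1))) / S1 \<in> OL" using w0 by (auto simp: val_le_iff)
    define P1 where "P1 = b * S1"
    have P10: "P1 \<noteq> 0" using S10 b0 by (simp add: P1_def)
    define r where "r = n * e / P1"
    have "r = (n * (\<alpha> k * b^(k-1))) / S1"
    proof -
      have "e = b * (\<alpha> k * b^(k-1))" unfolding e_def E_def using k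
        by (cases k) auto
      thus ?thesis unfolding r_def P1_def using b0 by simp
    qed
    hence rO: "r \<in> OL" using rO' by simp
    define P where "P = (\<lambda>k'. \<Sum>i=0..d. of_nat (i choose k') * E i)"
    have PK: "P k' \<in> K" for k' unfolding P_def using EK by (intro K_sum K_mult) auto
    have Pe: "P k' / e \<in> OL" for k'
    proof -
      have "P k' / e = (\<Sum>i=0..d. of_nat (i choose k') * (E i / e))" unfolding P_def
        by (simp add: sum_divide_distrib)
      also have "\<dots> \<in> OL" using EO by (intro O_sum O_mult) auto
      finally show ?thesis .
    qed
    have P1eq: "P 1 = P1"
    proof -
      have "P 1 = (\<Sum>i=1..d. of_nat i * E i)" unfolding P_def sum_split0 by simp
      also have "\<dots> = (\<Sum>i=1..d. b * (of_nat i * \<alpha> i * b^(i-1)))"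
      proof (intro sum.cong refl)
        fix i assume "i \<in> {1..d}"
        hence "b ^ i = b * b ^ (i - 1)" by (cases i) auto
        thus "of_nat i * E i = b * (of_nat i * \<alpha> i * b^(i-1))" unfolding E_def by simp
      qed
      also have "\<dots> = P1" unfolding P1_def S1_def by (simp add: sum_distrib_left)
      finally show ?thesis .
    qed
    define c where "c = (\<lambda>k'. n ^ k' * P k' / (n * P1))"
    have gt: "(\<Sum>k'=0..d. c k' * t ^ k') = (\<Sum>i=0..d. E i * (1 + n * t) ^ i) / (n * P1)" for t
      unfolding taylor c_def P_def by (simp add: sum_divide_distrib)
    have c1: "c 1 = 1" unfolding c_def P1eq using n0 P10 by simp
    have cK: "c k' \<in> K" for k' unfolding c_def P1_def S1_def using nO PK bK aK
      by (intro K_div K_mult K_pow K_sum) auto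
    have cO2: "c k' \<in> OL" if "k' \<ge> 2" for k'
    proof -
      have "c k' = n ^ (k' - 2) * (P k' / e) * r"
      proof -
        have "n ^ k' = n ^ (k' - 2) * n * n" using that
          by (metis (no_types) le_add_diff_inverse2 power_add power2_eq_square mult.assoc)
        thus ?thesis unfolding c_def r_def using e0 n0 P10 by (simp add: field_simps)
      qed
      also have "\<dots> \<in> OL" using nO Pe rO by (intro O_mult O_pow) auto
      finally show ?thesis .
    qed
    have cO1: "c k' \<in> OL" if "k' \<ge> 1" for k'
      using cO2[of k'] c1 that by (cases "k' = 1") auto
    define \<nu> where "\<nu> = (\<Sum>i=0..d. (E i / e) * u^i * mm i)"
    have \<nu>M: "\<nu> \<in> MM" unfolding \<nu>_def using EO uO mm by (intro MM_sum MM_mult O_mult O_pow) auto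
    have "(\<Sum>i=0..d. E i * u^i) + n^2 * (\<Sum>i=0..d. E i * u^i * mm i) = 0"
      using key0 by (simp add: algebra_simps sum.distrib sum_distrib_left)
    moreover have "(\<Sum>i=0..d. E i * u^i * mm i) = e * \<nu>"
      unfolding \<nu>_def sum_distrib_left using e0 by (intro sum.cong refl) simp
    ultimately have fmu: "(\<Sum>i=0..d. E i * u^i) = - (n^2 * (e * \<nu>))" by (simp add: add_eq_0_iff)
    have "(\<Sum>k'=0..d. c k' * \<mu> ^ k') = - (r * \<nu>)"
      unfolding gt fmu[unfolded u_def] r_def using n0 P10 by (simp add: field_simps power2_eq_square)
    hence "c 0 = - (r * \<nu>) - (\<Sum>k'=1..d. c k' * \<mu> ^ k')" unfolding sum_split0 by (simp add: eq_diff_eq)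
    also have "\<dots> \<in> MM" using rO \<nu>M cO1 \<mu>
      by (intro MM_diff MM_uminus MM_mult MM_sum MM_pow) auto
    finally have c0: "c 0 \<in> MM" .
    have "\<forall>k'\<le>d. c k' \<in> K \<and> c k' \<in> OL"
    proof (intro allI impI conjI)
      fix k' show "c k' \<in> K" by (rule cK)
      show "c k' \<in> OL" using c0 cO1[of k'] by (cases "k' = 0") auto
    qed
    from hensel_gen[OF d1 this c0 c1] obtain t where t: "t \<in> K" "t \<in> MM" "(\<Sum>k'=0..d. c k' * t ^ k') = 0"
      by blast
    define x'' where "x'' = b * (1 + n * t)"
    have "x'' \<in> K" unfolding x''_def using bK nO t by (intro K_mult K_add) auto
    moreover have "close N b x''" unfolding x''_def n_def using t by (intro closeI) auto
    moreover have "(\<Sum>i=0..d. \<alpha> i * x''^i) = 0"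
    proof -
      have "(\<Sum>i=0..d. \<alpha> i * x''^i) = (\<Sum>i=0..d. E i * (1 + n * t) ^ i)"
        unfolding x''_def E_def by (simp add: power_mult_distrib mult.assoc)
      also have "\<dots> = (n * P1) * (\<Sum>k'=0..d. c k' * t ^ k')" unfolding gt using n0 P10 by simp
      also have "\<dots> = 0" using t by simp
      finally show ?thesis .
    qed
    ultimately show ?thesis by blast
  qed
qed

end

context vf begin

definition C1 :: "nat \<Rightarrow> nat \<Rightarrow> (nat \<Rightarrow> 'a) \<Rightarrow> 'a \<Rightarrow> bool" where
  "C1 N d a x \<longleftrightarrow> (\<forall>y. (\<forall>i\<in>{1..d}. close N (of_nat i * a i * x^(i-1)) (y i)) \<longrightarrow>
     (\<forall>i\<in>{1..d}. val_le OL (\<Sum>j=1..d. y j) (of_nat N * (a i * x^(i-1)))))"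

definition C1K :: "nat \<Rightarrow> nat \<Rightarrow> (nat \<Rightarrow> 'a) \<Rightarrow> 'a \<Rightarrow> bool" where
  "C1K N d a x \<longleftrightarrow> (\<forall>y. (\<forall>i\<in>{1..d}. y i \<in> K \<and> close N (of_nat i * a i * x^(i-1)) (y i)) \<longrightarrow>
     (\<forall>i\<in>{1..d}. val_le OL (\<Sum>j=1..d. y j) (of_nat N * (a i * x^(i-1)))))"

definition C2 :: "nat \<Rightarrow> nat \<Rightarrow> (nat \<Rightarrow> 'a) \<Rightarrow> 'a \<Rightarrow> bool" where
  "C2 N d a x \<longleftrightarrow> (\<exists>y. (\<forall>i\<le>d. close (N^2) (a i * x^i) (y i)) \<and> (\<Sum>i=0..d. y i) = 0)"

lemma not_val_le_iff: "\<not> val_le OL s w \<longleftrightarrow> w \<noteq> 0 \<and> s / w \<in> MM"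
proof
  assume nv: "\<not> val_le OL s w"
  show "w \<noteq> 0 \<and> s / w \<in> MM"
  proof (cases "s = 0")
    case True thus ?thesis using nv by (auto simp: val_le_iff)
  next
    case False
    hence "w / s \<notin> OL" using nv by (auto simp: val_le_iff)
    moreover hence "w \<noteq> 0" by auto
    ultimately show ?thesis using notO_inv[of "w/s"] by (simp add: inverse_divide)
  qed
next
  assume a: "w \<noteq> 0 \<and> s / w \<in> MM"
  show "\<not> val_le OL s w"
  proof (cases "s = 0")
    case True thus ?thesis using a by (auto simp: val_le_iff)
  next
    case False
    hence "inverse (s / w) \<notin> OL" using a by (auto simp: MM_iff)
    thus ?thesis using False by (auto simp: val_le_iff inverse_divide)
  qed
qed

lemma close_term:
  assumes "N \<ge> 1" "close (N^2) a a'" "close N x x'"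
  shows "close N (c * a * x^j) (c * a' * x'^j)"
proof -
  have "close N a a'" using close_dvd[OF _ assms(2), of N] by (simp add: power2_eq_square)
  hence "close N (c * a) (c * a')" by (rule close_cmult)
  thus ?thesis using close_mult close_pow[OF assms(3)] by blast
qed

lemma inv1:
  assumes N: "N \<ge> 1" and ca: "\<forall>i\<le>d. close (N^2) (a i) (a' i)" and cx: "close N x x'"
    and c1: "C1 N d a x"
  shows "C1 N d a' x'"
  unfolding C1_def
proof (intro allI impI ballI)
  fix y i assume y: "\<forall>i\<in>{1..d}. close N (of_nat i * a' i * x'^(i-1)) (y i)" and i: "i \<in> {1..d}"
  have "\<forall>i\<in>{1..d}. close N (of_nat i * a i * x^(i-1)) (y i)"
  proof
    fix j assume j: "j \<in> {1..d}"
    have "close N (of_nat j * a j * x^(j-1)) (of_nat j * a' j * x'^(j-1))"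
      using close_term[OF N _ cx] ca j by auto
    thus "close N (of_nat j * a j * x^(j-1)) (y j)" using close_trans y j by blast
  qed
  hence "val_le OL (\<Sum>j=1..d. y j) (of_nat N * (a i * x^(i-1)))" using c1 i unfolding C1_def by blast
  moreover have "close N (of_nat N * (a i * x^(i-1))) (of_nat N * (a' i * x'^(i-1)))"
    using close_term[OF N _ cx, of "a i" "a' i" "of_nat N" "i - 1"] ca i by (auto simp: mult.assoc)
  ultimately show "val_le OL (\<Sum>j=1..d. y j) (of_nat N * (a' i * x'^(i-1)))"
    using val_le_close2 by blast
qed

lemma inv2:
  assumes ca: "\<forall>i\<le>d. close (N^2) (a i) (a' i)" and c2: "C2 N d a x"
  shows "C2 N d a' x"
proof -
  obtain y where y: "\<forall>i\<le>d. close (N^2) (a i * x^i) (y i)" "(\<Sum>i=0..d. y i) = 0"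
    using c2 unfolding C2_def by blast
  have "\<forall>i\<le>d. close (N^2) (a' i * x^i) (y i)"
  proof (intro allI impI)
    fix i assume "i \<le> d"
    hence "close (N^2) (a' i * x^i) (a i * x^i)" using ca close_sym close_mult[OF _ close_refl] by blast
    thus "close (N^2) (a' i * x^i) (y i)" using y \<open>i \<le> d\<close> close_trans by blast
  qed
  thus ?thesis using y unfolding C2_def by blast
qed

lemma desc1:
  assumes N: "N \<ge> 1" and aK: "\<forall>i\<le>d. a i \<in> K" and xK: "x \<in> K" and c1: "C1K N d a x"
  shows "C1 N d a x"
  unfolding C1_def
proof (intro allI impI ballI, rule ccontr)
  fix y i0 assume y: "\<forall>i\<in>{1..d}. close N (of_nat i * a i * x^(i-1)) (y i)" and i0: "i0 \<in> {1..d}"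
    and nv: "\<not> val_le OL (\<Sum>j=1..d. y j) (of_nat N * (a i0 * x^(i0-1)))"
  define n :: 'a where "n = of_nat N"
  have n0: "n \<noteq> 0" using N by (simp add: n_def)
  define c where "c = (\<lambda>i. of_nat i * a i * x^(i-1))"
  define w where "w = n * (a i0 * x^(i0-1))"
  have cK: "c i \<in> K" if "i \<le> d" for i unfolding c_def using aK xK that by (intro K_mult K_pow) auto
  have wK: "w \<in> K" unfolding w_def n_def using aK xK i0 by (intro K_mult K_pow) auto
  have "\<forall>i. \<exists>m. i \<in> {1..d} \<longrightarrow> m \<in> MM \<and> y i = c i * (1 + n * m)"
    using y unfolding c_def n_def by (meson closeE)
  then obtain m where m: "\<And>i. i \<in> {1..d} \<Longrightarrow> m i \<in> MM \<and> y i = c i * (1 + n * m i)" by metis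
  have w0: "w \<noteq> 0" and sM: "(\<Sum>j=1..d. y j) / w \<in> MM"
    using nv unfolding not_val_le_iff w_def n_def by auto
  define \<mu> where "\<mu> = (\<Sum>j=1..d. y j) / w"
  have s_eq: "(\<Sum>j=1..d. y j) = w * \<mu>" unfolding \<mu>_def using w0 by simp
  define s0 where "s0 = (\<Sum>i=1..d. c i)"
  have s0K: "s0 \<in> K" unfolding s0_def using cK by (intro K_sum) auto
  have "(\<Sum>j=1..d. y j) = s0 + n * (\<Sum>i=1..d. c i * m i)"
    unfolding s0_def using m by (simp add: sum_distrib_left sum.distrib[symmetric] algebra_simps)
  hence s0eq: "s0 / n = (w / n) * \<mu> + (\<Sum>i=1..d. c i * (- m i))"
    using s_eq n0 by (simp add: field_simps sum_negf)
  define cc where "cc = (\<lambda>j. if j = 0 then w / n else c j)"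
  define mf where "mf = (\<lambda>j. if j = 0 then \<mu> else - m j)"
  have "s0 / n = (\<Sum>j=0..d. cc j * mf j)"
    unfolding sum_split0 s0eq cc_def mf_def by simp
  moreover have "\<forall>j\<in>{0..d}. cc j \<in> K" unfolding cc_def using wK cK n0 by (auto simp: n_def)
  moreover have "\<forall>j\<in>{0..d}. mf j \<in> MM" unfolding mf_def \<mu>_def using sM m by (auto intro: MM_uminus)
  moreover have "s0 / n \<in> K" using s0K by (auto simp: n_def)
  ultimately obtain m' where m': "\<forall>j\<in>{0..d}. m' j \<in> K \<and> m' j \<in> MM" "s0 / n = (\<Sum>j=0..d. cc j * m' j)"
    using descent[of "{0..d}" cc "s0 / n" mf] by auto
  have m'eq: "s0 / n = (w / n) * m' 0 + (\<Sum>j=1..d. c j * m' j)"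
    using m'(2) unfolding sum_split0 cc_def by simp
  define y' where "y' = (\<lambda>i. c i * (1 + n * (- m' i)))"
  have y'K: "y' i \<in> K" if "i \<in> {1..d}" for i unfolding y'_def using cK m' that
    by (intro K_mult K_add K_uminus) (auto simp: n_def)
  have y'c: "close N (of_nat i * a i * x^(i-1)) (y' i)" if "i \<in> {1..d}" for i
    unfolding y'_def c_def n_def using m' that by (intro closeI[of "- m' i"] MM_uminus) auto
  have "(\<Sum>j=1..d. y' j) = s0 - n * (\<Sum>j=1..d. c j * m' j)"
    unfolding y'_def s0_def by (simp add: sum_distrib_left sum_subtractf[symmetric] algebra_simps)
  also have "\<dots> = w * m' 0" using m'eq n0 by (simp add: field_simps)
  finally have "(\<Sum>j=1..d. y' j) / w = m' 0" using w0 by simp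
  hence "\<not> val_le OL (\<Sum>j=1..d. y' j) w" unfolding not_val_le_iff using w0 m' by auto
  moreover have "val_le OL (\<Sum>j=1..d. y' j) w"
    using c1 y'K y'c i0 unfolding C1K_def w_def n_def by blast
  ultimately show False by blast
qed

end

context vf begin

lemma close_sym_iff: "close N x y \<longleftrightarrow> close N y x"
  using close_sym by blast

definition C2K :: "nat \<Rightarrow> nat \<Rightarrow> (nat \<Rightarrow> 'a) \<Rightarrow> 'a \<Rightarrow> bool" where
  "C2K N d a x \<longleftrightarrow> (\<exists>y. (\<forall>i\<le>d. y i \<in> K \<and> close (N^2) (a i * x^i) (y i)) \<and> (\<Sum>i=0..d. y i) = 0)"

lemma rvP_L_iff:
  assumes N: "N \<ge> 1" and z: "\<And>i. i \<le> d \<Longrightarrow> \<zeta>L i = rv UNIV OL (N^2) (\<alpha> i)"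
  shows "rv_P UNIV OL N d (rv UNIV OL N b) \<zeta>L \<longleftrightarrow> b \<noteq> 0 \<and>
    (\<exists>a. (\<forall>i\<le>d. close (N^2) (\<alpha> i) (a i)) \<and> (\<exists>x. close N b x \<and> C1 N d a x) \<and> (\<exists>x'. close N b x' \<and> C2 N d a x'))"
  unfolding rv_P_def RV_def C1_def C2_def using z
  by (simp add: rv_L_eq close_sym_iff[of _ _ 0] cong: conj_cong) (simp add: close_sym_iff)


lemma rvP_K_iff:
  assumes N: "N \<ge> 1" and bK: "b \<in> K" and aK: "\<forall>i\<le>d. \<alpha> i \<in> K"
    and z: "\<And>i. i \<le> d \<Longrightarrow> \<zeta> i = rv K (K \<inter> OL) (N^2) (\<alpha> i)"
  shows "rv_P K (K \<inter> OL) N d (rv K (K \<inter> OL) N b) \<zeta> \<longleftrightarrow> b \<noteq> 0 \<and>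
    (\<exists>a. (\<forall>i\<le>d. a i \<in> K \<and> close (N^2) (\<alpha> i) (a i)) \<and> (\<exists>x\<in>K. close N b x \<and> C1K N d a x)
       \<and> (\<exists>x'\<in>K. close N b x' \<and> C2K N d a x'))"
proof -
  have N2: "N^2 \<ge> 1" using N by simp
  have b0: "rv K (K \<inter> OL) N b \<noteq> rv K (K \<inter> OL) N 0 \<longleftrightarrow> b \<noteq> 0"
    using rv_K_eq[OF bK K0 N] by simp
  have RVb: "rv K (K \<inter> OL) N b \<in> RV K (K \<inter> OL) N" using bK by (simp add: RV_def)
  have A: "(\<forall>i\<le>d. a i \<in> K \<and> rv K (K \<inter> OL) (N^2) (a i) = \<zeta> i) \<longleftrightarrow>
      (\<forall>i\<le>d. a i \<in> K \<and> close (N^2) (\<alpha> i) (a i))" for a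
    using z rv_K_eq[OF _ _ N2] aK close_sym_iff by (metis (no_types, lifting))
  have X: "(x \<in> K \<and> rv K (K \<inter> OL) N x = rv K (K \<inter> OL) N b) \<longleftrightarrow> (x \<in> K \<and> close N b x)" for x
    using rv_K_eq[OF _ bK N, of x] close_sym_iff by blast
  have B: "(\<forall>y. (\<forall>i\<in>{1..d}. y i \<in> K \<and> rv K (K \<inter> OL) N (y i) = rv K (K \<inter> OL) N (of_nat i * a i * x ^ (i - 1))) \<longrightarrow>
              (\<forall>i\<in>{1..d}. val_le (K \<inter> OL) (\<Sum>j = 1..d. y j) (of_nat N * (a i * x ^ (i - 1)))))
        \<longleftrightarrow> C1K N d a x" if a: "\<forall>i\<le>d. a i \<in> K" and x: "x \<in> K" for a x
  proof -
    have cK: "of_nat i * a i * x ^ (i - 1) \<in> K" if "i \<in> {1..d}" for i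
      using a x that by (intro K_mult K_pow) auto
    have wK: "of_nat N * (a i * x ^ (i - 1)) \<in> K" if "i \<in> {1..d}" for i
      using a x that by (intro K_mult K_pow) auto
    have "(\<forall>i\<in>{1..d}. y i \<in> K \<and> rv K (K \<inter> OL) N (y i) = rv K (K \<inter> OL) N (of_nat i * a i * x ^ (i - 1)))
       \<longleftrightarrow> (\<forall>i\<in>{1..d}. y i \<in> K \<and> close N (of_nat i * a i * x ^ (i - 1)) (y i))" for y
      using rv_K_eq[OF _ cK N] close_sym_iff by blast
    moreover have "(\<forall>i\<in>{1..d}. y i \<in> K) \<Longrightarrow> (\<forall>i\<in>{1..d}. val_le (K \<inter> OL) (\<Sum>j = 1..d. y j) (of_nat N * (a i * x ^ (i - 1))))
       \<longleftrightarrow> (\<forall>i\<in>{1..d}. val_le OL (\<Sum>j = 1..d. y j) (of_nat N * (a i * x ^ (i - 1))))" for y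
    proof -
      assume "\<forall>i\<in>{1..d}. y i \<in> K"
      hence sK: "(\<Sum>j = 1..d. y j) \<in> K" by (intro K_sum) auto
      show ?thesis using val_le_K[OF sK wK] by blast
    qed
    ultimately show ?thesis unfolding C1K_def by (metis (no_types, lifting))
  qed
  have C: "(\<exists>y. (\<forall>i\<le>d. y i \<in> K \<and> rv K (K \<inter> OL) (N^2) (y i) = rv K (K \<inter> OL) (N^2) (a i * x' ^ i)) \<and> (\<Sum>i = 0..d. y i) = 0)
      \<longleftrightarrow> C2K N d a x'" if a: "\<forall>i\<le>d. a i \<in> K" and x: "x' \<in> K" for a x'
  proof -
    have cK: "a i * x' ^ i \<in> K" if "i \<le> d" for i using a x that by (intro K_mult K_pow) auto
    have "(\<forall>i\<le>d. y i \<in> K \<and> rv K (K \<inter> OL) (N^2) (y i) = rv K (K \<inter> OL) (N^2) (a i * x' ^ i))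
      \<longleftrightarrow> (\<forall>i\<le>d. y i \<in> K \<and> close (N^2) (a i * x' ^ i) (y i))" for y
      using rv_K_eq[OF _ cK N2] close_sym_iff by blast
    thus ?thesis unfolding C2K_def by simp
  qed
  show ?thesis
  proof
    assume "rv_P K (K \<inter> OL) N d (rv K (K \<inter> OL) N b) \<zeta>"
    then obtain a where a: "\<forall>i\<le>d. a i \<in> K \<and> rv K (K \<inter> OL) (N^2) (a i) = \<zeta> i"
      and i: "\<exists>x\<in>K. rv K (K \<inter> OL) N x = rv K (K \<inter> OL) N b \<and> (\<forall>y. (\<forall>i\<in>{1..d}. y i \<in> K \<and> rv K (K \<inter> OL) N (y i) = rv K (K \<inter> OL) N (of_nat i * a i * x ^ (i - 1))) \<longrightarrow>
              (\<forall>i\<in>{1..d}. val_le (K \<inter> OL) (\<Sum>j = 1..d. y j) (of_nat N * (a i * x ^ (i - 1)))))"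
      and ii: "\<exists>x'\<in>K. rv K (K \<inter> OL) N x' = rv K (K \<inter> OL) N b \<and> (\<exists>y. (\<forall>i\<le>d. y i \<in> K \<and> rv K (K \<inter> OL) (N^2) (y i) = rv K (K \<inter> OL) (N^2) (a i * x' ^ i)) \<and> (\<Sum>i = 0..d. y i) = 0)"
      and bb: "b \<noteq> 0"
      apply (unfold rv_P_def b0)
      apply (elim conjE exE)
      apply (rule that)
      apply assumption+
      done
    have aK': "\<forall>i\<le>d. a i \<in> K" using a by simp
    have "\<forall>i\<le>d. a i \<in> K \<and> close (N^2) (\<alpha> i) (a i)" using a A by simp
    moreover have "\<exists>x\<in>K. close N b x \<and> C1K N d a x"
    proof -
      obtain x where "x \<in> K" "rv K (K \<inter> OL) N x = rv K (K \<inter> OL) N b" and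
        h: "(\<forall>y. (\<forall>i\<in>{1..d}. y i \<in> K \<and> rv K (K \<inter> OL) N (y i) = rv K (K \<inter> OL) N (of_nat i * a i * x ^ (i - 1))) \<longrightarrow>
              (\<forall>i\<in>{1..d}. val_le (K \<inter> OL) (\<Sum>j = 1..d. y j) (of_nat N * (a i * x ^ (i - 1)))))"
        using i by (elim bexE conjE)
      thus ?thesis using X[of x] B[OF aK' \<open>x \<in> K\<close>] h by (intro bexI[of _ x]) simp_all
    qed
    moreover have "\<exists>x'\<in>K. close N b x' \<and> C2K N d a x'"
    proof -
      obtain x' where "x' \<in> K" "rv K (K \<inter> OL) N x' = rv K (K \<inter> OL) N b" and
        h: "(\<exists>y. (\<forall>i\<le>d. y i \<in> K \<and> rv K (K \<inter> OL) (N^2) (y i) = rv K (K \<inter> OL) (N^2) (a i * x' ^ i)) \<and> (\<Sum>i = 0..d. y i) = 0)"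
        using ii by (elim bexE conjE)
      thus ?thesis using X[of x'] C[OF aK' \<open>x' \<in> K\<close>] h by (intro bexI[of _ x']) simp_all
    qed
    ultimately show "b \<noteq> 0 \<and> (\<exists>a. (\<forall>i\<le>d. a i \<in> K \<and> close (N^2) (\<alpha> i) (a i)) \<and> (\<exists>x\<in>K. close N b x \<and> C1K N d a x)
       \<and> (\<exists>x'\<in>K. close N b x' \<and> C2K N d a x'))" using bb by blast
  next
    assume "b \<noteq> 0 \<and> (\<exists>a. (\<forall>i\<le>d. a i \<in> K \<and> close (N^2) (\<alpha> i) (a i)) \<and> (\<exists>x\<in>K. close N b x \<and> C1K N d a x)
       \<and> (\<exists>x'\<in>K. close N b x' \<and> C2K N d a x'))"
    then obtain a x x' where bb: "b \<noteq> 0" and a: "\<forall>i\<le>d. a i \<in> K \<and> close (N^2) (\<alpha> i) (a i)"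
      and x: "x \<in> K" "close N b x" "C1K N d a x" and x': "x' \<in> K" "close N b x'" "C2K N d a x'"
      by blast
    have aK': "\<forall>i\<le>d. a i \<in> K" using a by blast
    show "rv_P K (K \<inter> OL) N d (rv K (K \<inter> OL) N b) \<zeta>"
      unfolding rv_P_def b0
      apply (intro conjI RVb bb exI[of _ a])
      subgoal using A[of a] a by blast
      subgoal using x X[of x] B[OF aK' x(1)] by (intro bexI[of _ x]) simp_all
      subgoal using x' X[of x'] C[OF aK' x'(1)] by (intro bexI[of _ x']) simp_all
      done
  qed
qed


lemma rvP_main:
  assumes N: "N \<ge> 1" and bK: "b \<in> K" and aK: "\<forall>i\<le>d. \<alpha> i \<in> K"
    and z: "\<And>i. i \<le> d \<Longrightarrow> \<zeta> i = rv K (K \<inter> OL) (N^2) (\<alpha> i)"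
    and zL: "\<And>i. i \<le> d \<Longrightarrow> \<zeta>L i = rv UNIV OL (N^2) (\<alpha> i)"
  shows "rv_P K (K \<inter> OL) N d (rv K (K \<inter> OL) N b) \<zeta> \<longleftrightarrow> rv_P UNIV OL N d (rv UNIV OL N b) \<zeta>L"
proof -
  have KK: "rv_P K (K \<inter> OL) N d (rv K (K \<inter> OL) N b) \<zeta> \<longleftrightarrow> b \<noteq> 0 \<and> (\<exists>a. (\<forall>i\<le>d. a i \<in> K \<and> close (N^2) (\<alpha> i) (a i)) \<and> (\<exists>x\<in>K. close N b x \<and> C1K N d a x)
       \<and> (\<exists>x'\<in>K. close N b x' \<and> C2K N d a x'))"
    by (rule rvP_K_iff[OF N bK aK z])
  have LL: "rv_P UNIV OL N d (rv UNIV OL N b) \<zeta>L \<longleftrightarrow> b \<noteq> 0 \<and> (\<exists>a. (\<forall>i\<le>d. close (N^2) (\<alpha> i) (a i)) \<and> (\<exists>x. close N b x \<and> C1 N d a x)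
       \<and> (\<exists>x'. close N b x' \<and> C2 N d a x'))"
    by (rule rvP_L_iff[OF N zL])
  have KL: "b \<noteq> 0 \<and> (\<exists>a. (\<forall>i\<le>d. a i \<in> K \<and> close (N^2) (\<alpha> i) (a i)) \<and> (\<exists>x\<in>K. close N b x \<and> C1K N d a x)
       \<and> (\<exists>x'\<in>K. close N b x' \<and> C2K N d a x')) \<Longrightarrow> b \<noteq> 0 \<and> (\<exists>a. (\<forall>i\<le>d. close (N^2) (\<alpha> i) (a i)) \<and> (\<exists>x. close N b x \<and> C1 N d a x)
       \<and> (\<exists>x'. close N b x' \<and> C2 N d a x'))"
  proof -
  assume "b \<noteq> 0 \<and> (\<exists>a. (\<forall>i\<le>d. a i \<in> K \<and> close (N^2) (\<alpha> i) (a i)) \<and> (\<exists>x\<in>K. close N b x \<and> C1K N d a x)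
       \<and> (\<exists>x'\<in>K. close N b x' \<and> C2K N d a x'))"
  then obtain a x x' where bb: "b \<noteq> 0" and a: "\<forall>i\<le>d. a i \<in> K \<and> close (N^2) (\<alpha> i) (a i)"
      and x: "x \<in> K" "close N b x" "C1K N d a x" and x': "x' \<in> K" "close N b x'" "C2K N d a x'"
      by blast
  have "C1 N d a x" using desc1[OF N _ x(1) x(3)] a by blast
  moreover have "C2 N d a x'" using x'(3) unfolding C2K_def C2_def by blast
  ultimately show "b \<noteq> 0 \<and> (\<exists>a. (\<forall>i\<le>d. close (N^2) (\<alpha> i) (a i)) \<and> (\<exists>x. close N b x \<and> C1 N d a x)
       \<and> (\<exists>x'. close N b x' \<and> C2 N d a x'))" using bb a x x' by blast
  qed
  have LK: "b \<noteq> 0 \<and> (\<exists>a. (\<forall>i\<le>d. close (N^2) (\<alpha> i) (a i)) \<and> (\<exists>x. close N b x \<and> C1 N d a x)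
       \<and> (\<exists>x'. close N b x' \<and> C2 N d a x')) \<Longrightarrow> b \<noteq> 0 \<and> (\<exists>a. (\<forall>i\<le>d. a i \<in> K \<and> close (N^2) (\<alpha> i) (a i)) \<and> (\<exists>x\<in>K. close N b x \<and> C1K N d a x)
       \<and> (\<exists>x'\<in>K. close N b x' \<and> C2K N d a x'))"
  proof -
  assume "b \<noteq> 0 \<and> (\<exists>a. (\<forall>i\<le>d. close (N^2) (\<alpha> i) (a i)) \<and> (\<exists>x. close N b x \<and> C1 N d a x)
       \<and> (\<exists>x'. close N b x' \<and> C2 N d a x'))"
  then obtain a x x' where bb: "b \<noteq> 0" and a: "\<forall>i\<le>d. close (N^2) (\<alpha> i) (a i)"
      and x: "close N b x" "C1 N d a x" and x': "close N b x'" "C2 N d a x'"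
      by blast
  have ca: "\<forall>i\<le>d. close (N^2) (a i) (\<alpha> i)" using a close_sym_iff by simp
  have c1: "C1 N d \<alpha> b" using inv1[OF N ca close_sym[OF x(1)] x(2)] .
  have c2: "C2 N d \<alpha> x'" using inv2[OF ca x'(2)] .
  have C1h: "\<forall>i\<in>{1..d}. val_le OL (\<Sum>j=1..d. of_nat j * \<alpha> j * b^(j-1)) (of_nat N * (\<alpha> i * b^(i-1)))"
    using c1 unfolding C1_def
    by (rule allE[where x="\<lambda>j. of_nat j * \<alpha> j * b^(j-1)"]) simp
  obtain y where y: "\<forall>i\<le>d. close (N^2) (\<alpha> i * x'^i) (y i)" "(\<Sum>i=0..d. y i) = 0"
    using c2 unfolding C2_def by blast
  obtain x'' where x'': "x'' \<in> K" "close N b x''" "(\<Sum>i=0..d. \<alpha> i * x''^i) = 0"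
    using hensel_step[OF N bK bb aK C1h x'(1) y] by blast
  have "C1K N d \<alpha> b" using c1 unfolding C1_def C1K_def by blast
  moreover have "C2K N d \<alpha> x''" unfolding C2K_def using x'' aK
    by (intro exI[of _ "\<lambda>i. \<alpha> i * x''^i"]) (auto intro!: K_mult K_pow)
  moreover have "\<forall>i\<le>d. \<alpha> i \<in> K \<and> close (N^2) (\<alpha> i) (\<alpha> i)" using aK by simp
  ultimately show "b \<noteq> 0 \<and> (\<exists>a. (\<forall>i\<le>d. a i \<in> K \<and> close (N^2) (\<alpha> i) (a i)) \<and> (\<exists>x\<in>K. close N b x \<and> C1K N d a x)
       \<and> (\<exists>x'\<in>K. close N b x' \<and> C2K N d a x'))" using bb bK x'' close_refl[of N b] by (intro conjI exI[of _ \<alpha>]) blast+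
  qed
  show ?thesis using KK LL KL LK by blast
qed

end

context vf begin

lemma main:
  assumes N: "N \<ge> 1"
  shows "(let OK = K \<inter> OL; \<iota> = rv_incl K OL N; \<iota>2 = rv_incl K OL (N^2) in
      (\<forall>x\<in>K. \<forall>y\<in>K. rv K OK N x = rv K OK N y \<longleftrightarrow> rv UNIV OL N x = rv UNIV OL N y) \<and>
      (\<forall>x\<in>K. \<iota> (rv K OK N x) = rv UNIV OL N x) \<and>
      inj_on \<iota> (RV K OK N) \<and>
      \<iota> ` RV K OK N \<subseteq> RV UNIV OL N \<and>
      \<iota> (rv K OK N 0) = rv UNIV OL N 0 \<and>
      \<iota> (rv K OK N 1) = rv UNIV OL N 1 \<and>
      (\<forall>\<xi>\<in>RV K OK N. \<forall>\<eta>\<in>RV K OK N. \<forall>\<zeta>\<in>RV K OK N.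
         rv_mult_graph K OK N \<xi> \<eta> \<zeta> \<longleftrightarrow> rv_mult_graph UNIV OL N (\<iota> \<xi>) (\<iota> \<eta>) (\<iota> \<zeta>)) \<and>
      (\<forall>\<xi>\<in>RV K OK N. \<forall>\<eta>\<in>RV K OK N.
         rv_dvd K OK N \<xi> \<eta> \<longleftrightarrow> rv_dvd UNIV OL N (\<iota> \<xi>) (\<iota> \<eta>)) \<and>
      (\<forall>\<xi>1\<in>RV K OK N. \<forall>\<xi>2\<in>RV K OK N. \<forall>\<xi>3\<in>RV K OK N.
         rv_oplus K OK N \<xi>1 \<xi>2 \<xi>3 \<longleftrightarrow> rv_oplus UNIV OL N (\<iota> \<xi>1) (\<iota> \<xi>2) (\<iota> \<xi>3)) \<and>
      (\<forall>M::nat. M \<ge> 1 \<and> N dvd M \<longrightarrow>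
         (\<forall>\<eta>\<in>RV K OK M. \<forall>\<xi>\<in>RV K OK N.
            rv_NM_graph K OK N M \<eta> \<xi> \<longleftrightarrow> rv_NM_graph UNIV OL N M (rv_incl K OL M \<eta>) (\<iota> \<xi>))) \<and>
      (\<forall>d::nat. \<forall>\<xi>\<in>RV K OK N. \<forall>\<zeta>::nat \<Rightarrow> 'a set. (\<forall>i\<le>d. \<zeta> i \<in> RV K OK (N^2)) \<longrightarrow>
         (rv_P K OK N d \<xi> \<zeta> \<longleftrightarrow> rv_P UNIV OL N d (\<iota> \<xi>) (\<lambda>i. \<iota>2 (\<zeta> i)))))"
proof -
  have N2: "N^2 \<ge> 1" using N by simp
  have io: "\<And>x. x \<in> K \<Longrightarrow> rv_incl K OL N (rv K (K \<inter> OL) N x) = rv UNIV OL N x"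
    using rv_incl_rv[OF _ N] .
  show ?thesis unfolding Let_def
  proof (intro conjI)
    show "\<forall>x\<in>K. \<forall>y\<in>K. rv K (K \<inter> OL) N x = rv K (K \<inter> OL) N y \<longleftrightarrow> rv UNIV OL N x = rv UNIV OL N y"
      using rv_K_eq[OF _ _ N] rv_L_eq by simp
    show "\<forall>x\<in>K. rv_incl K OL N (rv K (K \<inter> OL) N x) = rv UNIV OL N x" using io by simp
    show "inj_on (rv_incl K OL N) (RV K (K \<inter> OL) N)"
    proof (rule inj_onI)
      fix \<xi> \<eta> assume "\<xi> \<in> RV K (K \<inter> OL) N" "\<eta> \<in> RV K (K \<inter> OL) N"
        and e: "rv_incl K OL N \<xi> = rv_incl K OL N \<eta>"
      then obtain a b where ab: "a \<in> K" "b \<in> K" "\<xi> = rv K (K \<inter> OL) N a" "\<eta> = rv K (K \<inter> OL) N b"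
        by (meson RV_K_obtain)
      have "rv UNIV OL N a = rv UNIV OL N b" using e ab io by simp
      thus "\<xi> = \<eta>" using ab rv_K_eq[OF _ _ N] rv_L_eq by simp
    qed
    show "rv_incl K OL N ` RV K (K \<inter> OL) N \<subseteq> RV UNIV OL N"
    proof
      fix z assume "z \<in> rv_incl K OL N ` RV K (K \<inter> OL) N"
      then obtain a where "a \<in> K" "z = rv_incl K OL N (rv K (K \<inter> OL) N a)"
        by (auto simp: RV_def)
      thus "z \<in> RV UNIV OL N" using io by (simp add: RV_def)
    qed
    show "rv_incl K OL N (rv K (K \<inter> OL) N 0) = rv UNIV OL N 0" using io[OF K0] .
    show "rv_incl K OL N (rv K (K \<inter> OL) N 1) = rv UNIV OL N 1" using io[OF K1] .
    show "\<forall>\<xi>\<in>RV K (K \<inter> OL) N. \<forall>\<eta>\<in>RV K (K \<inter> OL) N. \<forall>\<zeta>\<in>RV K (K \<inter> OL) N.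
         rv_mult_graph K (K \<inter> OL) N \<xi> \<eta> \<zeta> \<longleftrightarrow> rv_mult_graph UNIV OL N (rv_incl K OL N \<xi>) (rv_incl K OL N \<eta>) (rv_incl K OL N \<zeta>)"
    proof (intro ballI)
      fix \<xi> \<eta> \<zeta> assume "\<xi> \<in> RV K (K \<inter> OL) N" "\<eta> \<in> RV K (K \<inter> OL) N" "\<zeta> \<in> RV K (K \<inter> OL) N"
      then obtain a b c where "a \<in> K" "b \<in> K" "c \<in> K" "\<xi> = rv K (K \<inter> OL) N a"
        "\<eta> = rv K (K \<inter> OL) N b" "\<zeta> = rv K (K \<inter> OL) N c" by (meson RV_K_obtain)
      thus "rv_mult_graph K (K \<inter> OL) N \<xi> \<eta> \<zeta> \<longleftrightarrow> rv_mult_graph UNIV OL N (rv_incl K OL N \<xi>) (rv_incl K OL N \<eta>) (rv_incl K OL N \<zeta>)"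
        using io mult_K[OF _ _ _ N] mult_L by simp
    qed
    show "\<forall>\<xi>\<in>RV K (K \<inter> OL) N. \<forall>\<eta>\<in>RV K (K \<inter> OL) N.
         rv_dvd K (K \<inter> OL) N \<xi> \<eta> \<longleftrightarrow> rv_dvd UNIV OL N (rv_incl K OL N \<xi>) (rv_incl K OL N \<eta>)"
    proof (intro ballI)
      fix \<xi> \<eta> assume "\<xi> \<in> RV K (K \<inter> OL) N" "\<eta> \<in> RV K (K \<inter> OL) N"
      then obtain a b where "a \<in> K" "b \<in> K" "\<xi> = rv K (K \<inter> OL) N a"
        "\<eta> = rv K (K \<inter> OL) N b" by (meson RV_K_obtain)
      thus "rv_dvd K (K \<inter> OL) N \<xi> \<eta> \<longleftrightarrow> rv_dvd UNIV OL N (rv_incl K OL N \<xi>) (rv_incl K OL N \<eta>)"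
        using io dvd_K[OF _ _ N] dvd_L by simp
    qed
    show "\<forall>\<xi>1\<in>RV K (K \<inter> OL) N. \<forall>\<xi>2\<in>RV K (K \<inter> OL) N. \<forall>\<xi>3\<in>RV K (K \<inter> OL) N.
         rv_oplus K (K \<inter> OL) N \<xi>1 \<xi>2 \<xi>3 \<longleftrightarrow> rv_oplus UNIV OL N (rv_incl K OL N \<xi>1) (rv_incl K OL N \<xi>2) (rv_incl K OL N \<xi>3)"
    proof (intro ballI)
      fix \<xi>1 \<xi>2 \<xi>3 assume "\<xi>1 \<in> RV K (K \<inter> OL) N" "\<xi>2 \<in> RV K (K \<inter> OL) N" "\<xi>3 \<in> RV K (K \<inter> OL) N"
      then obtain a1 a2 a3 where a: "a1 \<in> K" "a2 \<in> K" "a3 \<in> K" and x: "\<xi>1 = rv K (K \<inter> OL) N a1"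
        "\<xi>2 = rv K (K \<inter> OL) N a2" "\<xi>3 = rv K (K \<inter> OL) N a3" by (meson RV_K_obtain)
      have "rv_oplus K (K \<inter> OL) N \<xi>1 \<xi>2 \<xi>3 \<longleftrightarrow>
         (\<exists>y1 y2 y3. y1 \<in> K \<and> y2 \<in> K \<and> y3 \<in> K \<and> close N a1 y1 \<and> close N a2 y2 \<and> close N a3 y3 \<and> y1 + y2 = y3)"
        unfolding x by (rule oplus_K[OF a N])
      also have "\<dots> \<longleftrightarrow> (\<exists>y1 y2 y3. close N a1 y1 \<and> close N a2 y2 \<and> close N a3 y3 \<and> y1 + y2 = y3)"
        using oplus_desc[OF a N] by blast
      also have "\<dots> \<longleftrightarrow> rv_oplus UNIV OL N (rv_incl K OL N \<xi>1) (rv_incl K OL N \<xi>2) (rv_incl K OL N \<xi>3)"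
        unfolding x io[OF a(1)] io[OF a(2)] io[OF a(3)] by (rule oplus_L[symmetric])
      finally show "rv_oplus K (K \<inter> OL) N \<xi>1 \<xi>2 \<xi>3 \<longleftrightarrow> rv_oplus UNIV OL N (rv_incl K OL N \<xi>1) (rv_incl K OL N \<xi>2) (rv_incl K OL N \<xi>3)" .
    qed
    show "\<forall>M::nat. M \<ge> 1 \<and> N dvd M \<longrightarrow>
         (\<forall>\<eta>\<in>RV K (K \<inter> OL) M. \<forall>\<xi>\<in>RV K (K \<inter> OL) N.
            rv_NM_graph K (K \<inter> OL) N M \<eta> \<xi> \<longleftrightarrow> rv_NM_graph UNIV OL N M (rv_incl K OL M \<eta>) (rv_incl K OL N \<xi>))"
    proof (intro allI impI ballI)
      fix M :: nat and \<eta> \<xi> assume M: "M \<ge> 1 \<and> N dvd M" and "\<eta> \<in> RV K (K \<inter> OL) M" "\<xi> \<in> RV K (K \<inter> OL) N"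
      then obtain a b where ab: "a \<in> K" "b \<in> K" "\<eta> = rv K (K \<inter> OL) M a" "\<xi> = rv K (K \<inter> OL) N b"
        by (meson RV_K_obtain)
      have ioM: "rv_incl K OL M (rv K (K \<inter> OL) M a) = rv UNIV OL M a" using rv_incl_rv[OF ab(1)] M by simp
      show "rv_NM_graph K (K \<inter> OL) N M \<eta> \<xi> \<longleftrightarrow> rv_NM_graph UNIV OL N M (rv_incl K OL M \<eta>) (rv_incl K OL N \<xi>)"
        unfolding ab(3,4) ioM io[OF ab(2)] using NM_K[OF ab(1,2) N] NM_L M by simp
    qed
    show "\<forall>d::nat. \<forall>\<xi>\<in>RV K (K \<inter> OL) N. \<forall>\<zeta>::nat \<Rightarrow> 'a set. (\<forall>i\<le>d. \<zeta> i \<in> RV K (K \<inter> OL) (N^2)) \<longrightarrow>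
         (rv_P K (K \<inter> OL) N d \<xi> \<zeta> \<longleftrightarrow> rv_P UNIV OL N d (rv_incl K OL N \<xi>) (\<lambda>i. rv_incl K OL (N^2) (\<zeta> i)))"
    proof (intro allI ballI impI)
      fix d :: nat and \<xi> and \<zeta> :: "nat \<Rightarrow> 'a set"
      assume "\<xi> \<in> RV K (K \<inter> OL) N" and z: "\<forall>i\<le>d. \<zeta> i \<in> RV K (K \<inter> OL) (N^2)"
      then obtain b where b: "b \<in> K" "\<xi> = rv K (K \<inter> OL) N b" by (meson RV_K_obtain)
      have "\<forall>i. \<exists>a. i \<le> d \<longrightarrow> a \<in> K \<and> \<zeta> i = rv K (K \<inter> OL) (N^2) a"
        using z unfolding RV_def by blast
      then obtain \<alpha> where \<alpha>: "\<And>i. i \<le> d \<Longrightarrow> \<alpha> i \<in> K \<and> \<zeta> i = rv K (K \<inter> OL) (N^2) (\<alpha> i)" by metis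
      have zL: "(\<lambda>i. rv_incl K OL (N^2) (\<zeta> i)) i = rv UNIV OL (N^2) (\<alpha> i)" if "i \<le> d" for i
        using \<alpha>[OF that] rv_incl_rv[OF _ N2] by simp
      show "rv_P K (K \<inter> OL) N d \<xi> \<zeta> \<longleftrightarrow> rv_P UNIV OL N d (rv_incl K OL N \<xi>) (\<lambda>i. rv_incl K OL (N^2) (\<zeta> i))"
        unfolding b(2) io[OF b(1)]
        by (rule rvP_main[OF N b(1) _ _ zL]) (use \<alpha> in auto)
    qed
  qed
qed

end

theorem proposition3p1:
  fixes K OL :: "'a::field_char_0 set"
  assumes valL: "valuation_ring UNIV OL"
    and henL: "henselian UNIV OL"
    and subK: "subfield K"
    and valK: "valuation_ring K (K \<inter> OL)"
    and henK: "henselian K (K \<inter> OL)"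
  shows "\<forall>N::nat. N \<ge> 1 \<longrightarrow>
    (let OK = K \<inter> OL; \<iota> = rv_incl K OL N; \<iota>2 = rv_incl K OL (N^2) in
      (\<forall>x\<in>K. \<forall>y\<in>K. rv K OK N x = rv K OK N y \<longleftrightarrow> rv UNIV OL N x = rv UNIV OL N y) \<and>
      (\<forall>x\<in>K. \<iota> (rv K OK N x) = rv UNIV OL N x) \<and>
      inj_on \<iota> (RV K OK N) \<and>
      \<iota> ` RV K OK N \<subseteq> RV UNIV OL N \<and>
      \<iota> (rv K OK N 0) = rv UNIV OL N 0 \<and>
      \<iota> (rv K OK N 1) = rv UNIV OL N 1 \<and>
      (\<forall>\<xi>\<in>RV K OK N. \<forall>\<eta>\<in>RV K OK N. \<forall>\<zeta>\<in>RV K OK N.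
         rv_mult_graph K OK N \<xi> \<eta> \<zeta> \<longleftrightarrow> rv_mult_graph UNIV OL N (\<iota> \<xi>) (\<iota> \<eta>) (\<iota> \<zeta>)) \<and>
      (\<forall>\<xi>\<in>RV K OK N. \<forall>\<eta>\<in>RV K OK N.
         rv_dvd K OK N \<xi> \<eta> \<longleftrightarrow> rv_dvd UNIV OL N (\<iota> \<xi>) (\<iota> \<eta>)) \<and>
      (\<forall>\<xi>1\<in>RV K OK N. \<forall>\<xi>2\<in>RV K OK N. \<forall>\<xi>3\<in>RV K OK N.
         rv_oplus K OK N \<xi>1 \<xi>2 \<xi>3 \<longleftrightarrow> rv_oplus UNIV OL N (\<iota> \<xi>1) (\<iota> \<xi>2) (\<iota> \<xi>3)) \<and>
      (\<forall>M::nat. M \<ge> 1 \<and> N dvd M \<longrightarrow>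
         (\<forall>\<eta>\<in>RV K OK M. \<forall>\<xi>\<in>RV K OK N.
            rv_NM_graph K OK N M \<eta> \<xi> \<longleftrightarrow> rv_NM_graph UNIV OL N M (rv_incl K OL M \<eta>) (\<iota> \<xi>))) \<and>
      (\<forall>d::nat. \<forall>\<xi>\<in>RV K OK N. \<forall>\<zeta>::nat \<Rightarrow> 'a set. (\<forall>i\<le>d. \<zeta> i \<in> RV K OK (N^2)) \<longrightarrow>
         (rv_P K OK N d \<xi> \<zeta> \<longleftrightarrow> rv_P UNIV OL N d (\<iota> \<xi>) (\<lambda>i. \<iota>2 (\<zeta> i)))))"
proof -
  interpret vf K OL using valL subK henK by unfold_locales
  show ?thesis using main by blast
qed


end
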